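(* Under the setting below, assume additionally that $G$ is convex (so $\mathbf T$ is single-valued). Then: (a) for every $\bm x\in\mathbb R^n$, $\operatorname{dist}(0,\partial\Phi^{\mathrm{FB}}_\Gamma(\bm x))\le\frac{N+\max_i\gamma_iL_{f_i}}{N\min_i\sqrt{\gamma_i}}\,\|\bm x-\mathbf T(\bm x)\|_{\Gamma^{-1}}$, where $\partial$ is the limiting subdifferential; (b) $\mathbf T$ is Lipschitz continuous with respect to $\|\cdot\|_{\Gamma^{-1}}$ with some constant $L_{\mathbf T}\ge0$; if in addition each $f_i$ is $\mu_{f_i}$-strongly convex, then one can take $L_{\mathbf T}\le1-\delta$ with $\delta=\frac1N\min_{i\in[N]}\gamma_i\mu_{f_i}$.
   Context: Setting: $N\ge1$, $n=\sum_{i=1}^N n_i$, $\bm x=(x_1,\dots,x_N)$ with $x_i\in\mathbb R^{n_i}$; $\Phi=F+G$ with $F(\bm x)=\frac1N\sum_i f_i(x_i)$, each $f_i:\mathbb R^{n_i}\to\mathbb R$ differentiable with $L_{f_i}$-Lipschitz gradient, $G:\mathbb R^n\to\mathbb R\cup\{+\infty\}$ proper lsc, $\arg\min\Phi\ne\emptyset$. $\gamma_i\in(0,N/L_{f_i})$, $\Gamma=\operatorname{blockdiag}(\gamma_1I_{n_1},\dots,\gamma_NI_{n_N})$, $\|x\|_V^2=\langle x,Vx\rangle$, $\operatorname{prox}_G^{V}(u)=\arg\min_w\{G(w)+\frac12\|w-u\|_V^2\}$, $\mathbf T(\bm x)=\operatorname{prox}_G^{\Gamma^{-1}}(\bm x-\Gamma\nabla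 F(\bm x))$. Forward-backward envelope: $\Phi^{\mathrm{FB}}_\Gamma(\bm x):=\inf_{\bm w}\{F(\bm x)+\langle\nabla F(\bm x),\bm w-\bm x\rangle+G(\bm w)+\frac12\|\bm w-\bm x\|^2_{\Gamma^{-1}}\}$. *)

theory Defs
  imports "HOL-Analysis.Analysis"
begin

text \<open>Block structure: the whole space R^n is modelled as real^'n; each coordinate j
belongs to the block blk j (blocks are numbered 0..N-1). The block x_i of x is
encoded by the projection blkproj blk i x, which zeroes all other coordinates.\<close>

definition blkproj :: "('n::finite \<Rightarrow> nat) \<Rightarrow> nat \<Rightarrow> real^'n \<Rightarrow> real^'n" where
  "blkproj blk i x = (\<chi> j. if blk j = i then x $ j else 0)"

text \<open>Gamma v, with Gamma = blockdiag(gamma_1 I, ..., gamma_N I).\<close>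
definition Gam :: "('n::finite \<Rightarrow> nat) \<Rightarrow> (nat \<Rightarrow> real) \<Rightarrow> real^'n \<Rightarrow> real^'n" where
  "Gam blk \<gamma> v = (\<chi> j. \<gamma> (blk j) * v $ j)"

definition normGinv2 :: "('n::finite \<Rightarrow> nat) \<Rightarrow> (nat \<Rightarrow> real) \<Rightarrow> real^'n \<Rightarrow> real" where
  "normGinv2 blk \<gamma> v = (\<Sum>j\<in>UNIV. (v $ j)^2 / \<gamma> (blk j))"

definition normGinv :: "('n::finite \<Rightarrow> nat) \<Rightarrow> (nat \<Rightarrow> real) \<Rightarrow> real^'n \<Rightarrow> real" where
  "normGinv blk \<gamma> v = sqrt (normGinv2 blk \<gamma> v)"

text \<open>Proximal map prox_G^{Gamma^{-1}}(u): the (unique, when G is proper lsc convex) minimiser.\<close>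
definition proxG :: "('n::finite \<Rightarrow> nat) \<Rightarrow> (nat \<Rightarrow> real) \<Rightarrow> (real^'n \<Rightarrow> ereal) \<Rightarrow> real^'n \<Rightarrow> real^'n" where
  "proxG blk \<gamma> G u = (THE w. \<forall>z. G w + ereal (normGinv2 blk \<gamma> (w - u) / 2)
                                  \<le> G z + ereal (normGinv2 blk \<gamma> (z - u) / 2))"

definition FBE :: "('n::finite \<Rightarrow> nat) \<Rightarrow> (nat \<Rightarrow> real) \<Rightarrow> (real^'n \<Rightarrow> real) \<Rightarrow> (real^'n \<Rightarrow> real^'n)
                   \<Rightarrow> (real^'n \<Rightarrow> ereal) \<Rightarrow> real^'n \<Rightarrow> ereal" where
  "FBE blk \<gamma> F gF G x = (INF w. ereal (F x + gF x \<bullet> (w - x)) + G w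
                                 + ereal (normGinv2 blk \<gamma> (w - x) / 2))"

definition proper_fun :: "('a \<Rightarrow> ereal) \<Rightarrow> bool" where
  "proper_fun G \<longleftrightarrow> (\<forall>x. G x \<noteq> -\<infinity>) \<and> (\<exists>x. G x \<noteq> \<infinity>)"

definition lsc_fun :: "('a::topological_space \<Rightarrow> ereal) \<Rightarrow> bool" where
  "lsc_fun G \<longleftrightarrow> (\<forall>x X. X \<longlonglongrightarrow> x \<longrightarrow> G x \<le> liminf (\<lambda>k. G (X k)))"

definition convex_fun :: "('a::real_vector \<Rightarrow> ereal) \<Rightarrow> bool" where
  "convex_fun G \<longleftrightarrow> (\<forall>x y t. 0 < t \<and> t < 1 \<longrightarrow>
       G ((1 - t) *\<^sub>R x + t *\<^sub>R y) \<le> ereal (1 - t) * G x + ereal t * G y)"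

definition frechet_subdiff :: "('a::real_inner \<Rightarrow> ereal) \<Rightarrow> 'a \<Rightarrow> 'a set" where
  "frechet_subdiff f x = {v. \<bar>f x\<bar> \<noteq> \<infinity> \<and>
     (\<forall>e>0. \<exists>d>0. \<forall>y. norm (y - x) < d \<longrightarrow>
        f y \<ge> f x + ereal (v \<bullet> (y - x) - e * norm (y - x)))}"

definition limiting_subdiff :: "('a::real_inner \<Rightarrow> ereal) \<Rightarrow> 'a \<Rightarrow> 'a set" where
  "limiting_subdiff f x = {v. \<bar>f x\<bar> \<noteq> \<infinity> \<and>
     (\<exists>X V. X \<longlonglongrightarrow> x \<and> (\<lambda>k. f (X k)) \<longlonglongrightarrow> f x \<and> V \<longlonglongrightarrow> v \<and>
            (\<forall>k. V k \<in> frechet_subdiff f (X k)))}"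

text \<open>dist(0,S) with the convention dist(0,{}) = +infinity.\<close>
definition dist0 :: "'a::real_normed_vector set \<Rightarrow> ereal" where
  "dist0 S = (INF v\<in>S. ereal (norm v))"

end

theory Submission
  imports Defs
begin


lemma blkproj_nth[simp]: "blkproj blk i x $ j = (if blk j = i then x $ j else 0)"
  by (simp add: blkproj_def)

lemma blkproj_add: "blkproj blk i (x + y) = blkproj blk i x + blkproj blk i y"
  by (simp add: vec_eq_iff)
lemma blkproj_diff: "blkproj blk i (x - y) = blkproj blk i x - blkproj blk i y"
  by (simp add: vec_eq_iff)
lemma blkproj_scaleR: "blkproj blk i (c *\<^sub>R x) = c *\<^sub>R blkproj blk i x"
  by (simp add: vec_eq_iff)
lemma blkproj_idem[simp]: "blkproj blk i (blkproj blk i x) = blkproj blk i x"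
  by (simp add: vec_eq_iff)
lemma blkproj_other: "k \<noteq> i \<Longrightarrow> blkproj blk k (blkproj blk i x) = 0"
  by (simp add: vec_eq_iff)
lemma blkproj_sum: "blkproj blk i (sum h A) = (\<Sum>a\<in>A. blkproj blk i (h a))"
  by (induction A rule: infinite_finite_induct) (auto simp: blkproj_add vec_eq_iff)
lemma blkproj_inner: "blkproj blk i x \<bullet> y = x \<bullet> blkproj blk i y"
  unfolding inner_vec_def by (rule sum.cong) auto
lemma blkproj_inner2: "blkproj blk i x \<bullet> y = blkproj blk i x \<bullet> blkproj blk i y"
  unfolding inner_vec_def by (rule sum.cong) auto
lemma blkproj_linear: "bounded_linear (blkproj blk i)"
  apply (rule bounded_linearI')
  by (auto simp: blkproj_add blkproj_scaleR)

lemma norm_sq_vec: "(norm (v::real^'n))\<^sup>2 = (\<Sum>j\<in>UNIV. (v $ j)\<^sup>2)"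
  unfolding power2_norm_eq_inner inner_vec_def by (simp add: power2_eq_square)

lemma norm_sq_blkproj: "(norm (blkproj blk i v))\<^sup>2 = (\<Sum>j\<in>{j. blk j = i}. (v $ j)\<^sup>2)"
proof -
  have "(\<lambda>j. (blkproj blk i v $ j)\<^sup>2) = (\<lambda>j. if blk j = i then (v $ j)\<^sup>2 else 0)" by auto
  moreover have "(\<Sum>j\<in>{j\<in>UNIV. blk j = i}. (v $ j)\<^sup>2) = (\<Sum>j\<in>UNIV. if blk j = i then (v $ j)\<^sup>2 else 0)"
    by (rule sum.inter_filter) simp
  ultimately show ?thesis unfolding norm_sq_vec by (auto intro: sum.cong)
qed

lemma norm_sq_blocks:
  assumes "\<forall>j. blk j < N"
  shows "(norm (v::real^'n))\<^sup>2 = (\<Sum>i<N. (norm (blkproj blk i v))\<^sup>2)"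
proof -
  have "(\<Sum>i\<in>{..<N}. sum (\<lambda>j. (v $ j)\<^sup>2) {j\<in>UNIV. blk j = i}) = sum (\<lambda>j. (v $ j)\<^sup>2) UNIV"
    by (rule sum.group) (use assms in auto)
  then show ?thesis unfolding norm_sq_blkproj by (simp add: norm_sq_vec)
qed


lemma line_deriv:
  assumes "GDERIV h (x + t *\<^sub>R d) :> gr"
  shows "((\<lambda>s. h (x + s *\<^sub>R d)) has_real_derivative (gr \<bullet> d)) (at t)"
proof -
  have 1: "(h has_derivative (\<lambda>v. v \<bullet> gr)) (at (x + t *\<^sub>R d))"
    using assms by (simp add: gderiv_def)
  have 2: "((\<lambda>s. x + s *\<^sub>R d) has_derivative (\<lambda>s. s *\<^sub>R d)) (at t)"
    by (auto intro!: derivative_eq_intros)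
  have "((h \<circ> (\<lambda>s. x + s *\<^sub>R d)) has_derivative ((\<lambda>v. v \<bullet> gr) \<circ> (\<lambda>s. s *\<^sub>R d))) (at t)"
    by (rule diff_chain_at[OF 2]) (use 1 in simp)
  moreover have "((\<lambda>v. v \<bullet> gr) \<circ> (\<lambda>s. s *\<^sub>R d)) = (\<lambda>s. (gr \<bullet> d) * s)"
    by (auto simp: inner_commute)
  ultimately show ?thesis
    by (simp add: has_field_derivative_def o_def)
qed

lemma descent:
  fixes f :: "'a::real_inner \<Rightarrow> real"
  assumes gd: "\<forall>x. GDERIV f x :> g x"
    and lip: "\<forall>x y. norm (g x - g y) \<le> L * norm (x - y)"
  shows "f y \<le> f x + g x \<bullet> (y - x) + L / 2 * (norm (y - x))\<^sup>2"
    and "f y \<ge> f x + g x \<bullet> (y - x) - L / 2 * (norm (y - x))\<^sup>2"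
proof -
  define d where "d = y - x"
  have y: "y = x + 1 *\<^sub>R d" by (simp add: d_def)
  have D: "((\<lambda>s. f (x + s *\<^sub>R d)) has_real_derivative (g (x + t *\<^sub>R d) \<bullet> d)) (at t)" for t
    using line_deriv gd by blast
  have gb: "\<bar>(g (x + t *\<^sub>R d) - g x) \<bullet> d\<bar> \<le> L * t * (norm d)\<^sup>2" if "0 \<le> t" for t
  proof -
    have "\<bar>(g (x + t *\<^sub>R d) - g x) \<bullet> d\<bar> \<le> norm (g (x + t *\<^sub>R d) - g x) * norm d"
      by (rule Cauchy_Schwarz_ineq2)
    also have "\<dots> \<le> L * norm (t *\<^sub>R d) * norm d"
      using lip by (metis add_diff_cancel_left' mult_right_mono norm_ge_zero)
    finally show ?thesis using that by (simp add: power2_eq_square mult_ac)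
  qed
  let ?p = "\<lambda>s. f (x + s *\<^sub>R d) - s * (g x \<bullet> d) - L / 2 * s\<^sup>2 * (norm d)\<^sup>2"
  have "?p 1 \<le> ?p 0"
  proof (rule DERIV_nonpos_imp_nonincreasing[of 0 1])
    fix t :: real assume t: "0 \<le> t" "t \<le> 1"
    have "(?p has_real_derivative (g (x + t *\<^sub>R d) \<bullet> d - g x \<bullet> d - L * t * (norm d)\<^sup>2)) (at t)"
      by (rule derivative_eq_intros D refl | simp)+
    moreover have "g (x + t *\<^sub>R d) \<bullet> d - g x \<bullet> d - L * t * (norm d)\<^sup>2 \<le> 0"
      using gb[OF t(1)] by (simp add: inner_diff_left)
    ultimately show "\<exists>y. (?p has_real_derivative y) (at t) \<and> y \<le> 0" by blast
  qed simp
  then show "f y \<le> f x + g x \<bullet> (y - x) + L / 2 * (norm (y - x))\<^sup>2"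
    by (simp add: d_def[symmetric] y)
  let ?q = "\<lambda>s. f (x + s *\<^sub>R d) - s * (g x \<bullet> d) + L / 2 * s\<^sup>2 * (norm d)\<^sup>2"
  have "?q 0 \<le> ?q 1"
  proof (rule DERIV_nonneg_imp_nondecreasing[of 0 1])
    fix t :: real assume t: "0 \<le> t" "t \<le> 1"
    have "(?q has_real_derivative (g (x + t *\<^sub>R d) \<bullet> d - g x \<bullet> d + L * t * (norm d)\<^sup>2)) (at t)"
      by (rule derivative_eq_intros D refl | simp)+
    moreover have "g (x + t *\<^sub>R d) \<bullet> d - g x \<bullet> d + L * t * (norm d)\<^sup>2 \<ge> 0"
      using gb[OF t(1)] by (simp add: inner_diff_left)
    ultimately show "\<exists>y. (?q has_real_derivative y) (at t) \<and> y \<ge> 0" by blast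
  qed simp
  then show "f y \<ge> f x + g x \<bullet> (y - x) - L / 2 * (norm (y - x))\<^sup>2"
    by (simp add: d_def[symmetric] y)
qed


definition Dm :: "('n::finite \<Rightarrow> nat) \<Rightarrow> (nat \<Rightarrow> real) \<Rightarrow> real^'n \<Rightarrow> real^'n" where
  "Dm blk \<gamma> v = (\<chi> j. v $ j / sqrt (\<gamma> (blk j)))"

lemma Dm_nth[simp]: "Dm blk \<gamma> v $ j = v $ j / sqrt (\<gamma> (blk j))"
  by (simp add: Dm_def)
lemma Dm_diff: "Dm blk \<gamma> (u - v) = Dm blk \<gamma> u - Dm blk \<gamma> v"
  by (simp add: vec_eq_iff diff_divide_distrib)
lemma Dm_add: "Dm blk \<gamma> (u + v) = Dm blk \<gamma> u + Dm blk \<gamma> v"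
  by (simp add: vec_eq_iff add_divide_distrib)
lemma Dm_scaleR: "Dm blk \<gamma> (c *\<^sub>R v) = c *\<^sub>R Dm blk \<gamma> v"
  by (simp add: vec_eq_iff)
lemma Dm_minus: "Dm blk \<gamma> (- v) = - Dm blk \<gamma> v"
  by (simp add: vec_eq_iff)

locale setting =
  fixes N :: nat and blk :: "'n::finite \<Rightarrow> nat"
    and f :: "nat \<Rightarrow> real^'n \<Rightarrow> real" and g :: "nat \<Rightarrow> real^'n \<Rightarrow> real^'n"
    and L :: "nat \<Rightarrow> real" and \<gamma> :: "nat \<Rightarrow> real" and G :: "real^'n \<Rightarrow> ereal"
  assumes N_pos: "N \<ge> 1"
    and blk_range: "\<forall>j. blk j < N"
    and blk_nonempty: "\<forall>i<N. \<exists>j. blk j = i"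
    and f_block: "\<forall>i<N. \<forall>x y. blkproj blk i x = blkproj blk i y \<longrightarrow> f i x = f i y"
    and f_grad: "\<forall>i<N. \<forall>x. GDERIV (f i) x :> g i x"
    and L_nonneg: "\<forall>i<N. L i \<ge> 0"
    and g_lip: "\<forall>i<N. \<forall>x y. norm (g i x - g i y) \<le> L i * norm (x - y)"
    and \<gamma>_pos: "\<forall>i<N. \<gamma> i > 0"
    and \<gamma>_bound: "\<forall>i<N. \<gamma> i * L i < real N"
    and G_proper: "proper_fun G"
    and G_lsc: "lsc_fun G"
    and G_convex: "convex_fun G"
    and argmin: "\<exists>x. \<forall>y. ereal ((\<Sum>i<N. f i x) / real N) + G x
                         \<le> ereal ((\<Sum>i<N. f i y) / real N) + G y"
begin

abbreviation P where "P i \<equiv> blkproj blk i"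
abbreviation D where "D \<equiv> Dm blk \<gamma>"

lemma gpos: "\<gamma> (blk j) > 0" using \<gamma>_pos blk_range by auto

lemma normGinv2_D: "normGinv2 blk \<gamma> v = (norm (D v))\<^sup>2"
proof -
  have "(D v $ j)\<^sup>2 = (v $ j)\<^sup>2 / \<gamma> (blk j)" for j
    using gpos[of j] by (simp add: power_divide)
  then show ?thesis unfolding normGinv2_def norm_sq_vec by simp
qed

lemma normGinv_D: "normGinv blk \<gamma> v = norm (D v)"
  unfolding normGinv_def normGinv2_D by simp

lemma D_zero: "D v = 0 \<longleftrightarrow> v = 0"
  by (auto simp: vec_eq_iff) (metis gpos less_irrefl)

lemma P_D: "P i (D v) = (1 / sqrt (\<gamma> i)) *\<^sub>R P i v"
  by (simp add: vec_eq_iff)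

lemma normD_blocks: "(norm (D v))\<^sup>2 = (\<Sum>i<N. (norm (P i v))\<^sup>2 / \<gamma> i)"
proof -
  have "(norm (D v))\<^sup>2 = (\<Sum>i<N. (norm (P i (D v)))\<^sup>2)"
    by (rule norm_sq_blocks) (use blk_range in auto)
  also have "\<dots> = (\<Sum>i<N. (norm (P i v))\<^sup>2 / \<gamma> i)"
  proof (rule sum.cong)
    fix i assume "i \<in> {..<N}"
    then have "\<gamma> i > 0" using \<gamma>_pos by auto
    then show "(norm (P i (D v)))\<^sup>2 = (norm (P i v))\<^sup>2 / \<gamma> i"
      unfolding P_D by (simp add: power_mult_distrib power_divide)
  qed simp
  finally show ?thesis .
qed

lemma block_lip:
  assumes c: "c \<ge> 0" and h: "\<forall>i<N. norm (P i a) \<le> c * norm (P i b)"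
  shows "norm (D a) \<le> c * norm (D b)"
proof -
  have "(norm (D a))\<^sup>2 \<le> (c * norm (D b))\<^sup>2"
  proof -
    have "(norm (D a))\<^sup>2 = (\<Sum>i<N. (norm (P i a))\<^sup>2 / \<gamma> i)" by (rule normD_blocks)
    also have "\<dots> \<le> (\<Sum>i<N. c\<^sup>2 * ((norm (P i b))\<^sup>2 / \<gamma> i))"
    proof (rule sum_mono)
      fix i assume i: "i \<in> {..<N}"
      then have gi: "\<gamma> i > 0" using \<gamma>_pos by auto
      have "norm (P i a) \<le> c * norm (P i b)" using h i by auto
      then have "(norm (P i a))\<^sup>2 \<le> (c * norm (P i b))\<^sup>2"
        by (rule power_mono) simp
      then have "(norm (P i a))\<^sup>2 / \<gamma> i \<le> (c * norm (P i b))\<^sup>2 / \<gamma> i"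
        using gi by (intro divide_right_mono) auto
      then show "(norm (P i a))\<^sup>2 / \<gamma> i \<le> c\<^sup>2 * ((norm (P i b))\<^sup>2 / \<gamma> i)"
        by (simp only: power_mult_distrib times_divide_eq_right)
    qed
    also have "\<dots> = (c * norm (D b))\<^sup>2"
      by (simp only: power_mult_distrib normD_blocks sum_distrib_left)
    finally show ?thesis .
  qed
  moreover have "0 \<le> c * norm (D b)" using c by simp
  ultimately show ?thesis by (rule power2_le_imp_le)
qed

definition s0 where "s0 = Min ((\<lambda>i. sqrt (\<gamma> i)) ` {..<N})"

lemma s0_pos: "s0 > 0"
proof -
  have "0 \<in> {..<N}" using N_pos by simp
  then have "{..<N} \<noteq> {}" by blast
  then show ?thesis unfolding s0_def using \<gamma>_pos by (subst Min_gr_iff) auto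
qed

lemma s0_le: "s0 \<le> sqrt (\<gamma> (blk j))"
  unfolding s0_def using blk_range by (intro Min_le) auto

lemma normD_le: "norm (D v) \<le> norm v / s0"
proof -
  have c: "(D v $ j)\<^sup>2 \<le> (v $ j)\<^sup>2 / s0\<^sup>2" for j
  proof -
    have "s0\<^sup>2 \<le> (sqrt (\<gamma> (blk j)))\<^sup>2" using s0_le[of j] s0_pos by (intro power_mono) auto
    then have le: "s0\<^sup>2 \<le> \<gamma> (blk j)" using gpos[of j] by simp
    have "(D v $ j)\<^sup>2 = (v $ j)\<^sup>2 / \<gamma> (blk j)" using gpos[of j] by (simp add: power_divide)
    also have "\<dots> \<le> (v $ j)\<^sup>2 / s0\<^sup>2"
      by (rule divide_left_mono) (use le s0_pos gpos[of j] in auto)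
    finally show ?thesis .
  qed
  have "(norm (D v))\<^sup>2 = (\<Sum>j\<in>UNIV. (D v $ j)\<^sup>2)" by (rule norm_sq_vec)
  also have "\<dots> \<le> (\<Sum>j\<in>UNIV. (v $ j)\<^sup>2 / s0\<^sup>2)" by (rule sum_mono) (rule c)
  also have "\<dots> = (norm v / s0)\<^sup>2"
    by (simp only: sum_divide_distrib[symmetric] norm_sq_vec[symmetric] power_divide)
  finally have "(norm (D v))\<^sup>2 \<le> (norm v / s0)\<^sup>2" .
  moreover have "0 \<le> norm v / s0" using s0_pos by simp
  ultimately show ?thesis by (rule power2_le_imp_le)
qed

lemma sqrt_sq_g: "sqrt (\<gamma> (blk j)) * sqrt (\<gamma> (blk j)) = \<gamma> (blk j)"
  using gpos[of j] by simp

lemma D_Gam_inner: "D u \<bullet> D (Gam blk \<gamma> v) = u \<bullet> v"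
proof -
  have "D u $ j * D (Gam blk \<gamma> v) $ j = u $ j * v $ j" for j
  proof -
    have "sqrt (\<gamma> (blk j)) \<noteq> 0" using gpos[of j] by simp
    then show ?thesis using sqrt_sq_g[of j] by (simp add: Gam_def divide_simps; simp add: mult_ac)
  qed
  then show ?thesis unfolding inner_vec_def by simp
qed

lemma DD_inner: "h \<bullet> D (D r) = D h \<bullet> D r"
  unfolding inner_vec_def by (rule sum.cong) auto

lemma Gam_DD_inner: "Gam blk \<gamma> v \<bullet> D (D r) = v \<bullet> r"
proof -
  have "Gam blk \<gamma> v $ j * D (D r) $ j = v $ j * r $ j" for j
  proof -
    have "sqrt (\<gamma> (blk j)) \<noteq> 0" using gpos[of j] by simp
    then show ?thesis using sqrt_sq_g[of j] by (simp add: Gam_def divide_simps; simp add: mult_ac)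
  qed
  then show ?thesis unfolding inner_vec_def by simp
qed

lemma P_Gam: "P i (Gam blk \<gamma> v) = \<gamma> i *\<^sub>R P i v"
  by (simp add: vec_eq_iff Gam_def)

end


context setting begin

lemma g_proj: assumes i: "i < N" shows "g i x = P i (g i (P i x))"
proof -
  have fe: "f i = (\<lambda>z. f i (P i z))"
  proof
    fix z
    have "P i z = P i (P i z)" by simp
    then show "f i z = f i (P i z)" using f_block i by blast
  qed
  have d1: "(f i has_derivative (\<lambda>h. h \<bullet> g i x)) (at x)"
    using f_grad i by (simp add: gderiv_def)
  have dP: "(P i has_derivative P i) (at x)"
    by (rule bounded_linear_imp_has_derivative[OF blkproj_linear])
  have d0: "(f i has_derivative (\<lambda>h. h \<bullet> g i (P i x))) (at (P i x))"
    using f_grad i by (simp add: gderiv_def)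
  have "((f i \<circ> P i) has_derivative ((\<lambda>h. h \<bullet> g i (P i x)) \<circ> P i)) (at x)"
    by (rule diff_chain_at[OF dP d0])
  then have d2: "(f i has_derivative ((\<lambda>h. h \<bullet> g i (P i x)) \<circ> P i)) (at x)"
    using fe by (simp add: o_def)
  have eq: "(\<lambda>h. h \<bullet> g i x) = ((\<lambda>h. h \<bullet> g i (P i x)) \<circ> P i)"
    by (rule has_derivative_unique[OF d1 d2])
  have "h \<bullet> g i x = h \<bullet> P i (g i (P i x))" for h
    using fun_cong[OF eq, of h] by (simp add: blkproj_inner)
  then have "(g i x - P i (g i (P i x))) \<bullet> g i x = (g i x - P i (g i (P i x))) \<bullet> P i (g i (P i x))"
    by blast
  then have "(g i x - P i (g i (P i x))) \<bullet> (g i x - P i (g i (P i x))) = 0"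
    by (simp only: inner_diff_right)
  then show ?thesis by simp
qed

lemma g_P: assumes "i < N" shows "g i (P i x) = g i x"
  using g_proj[OF assms, of "P i x"] g_proj[OF assms, of x] by simp

lemma P_g: assumes "i < N" shows "P i (g i x) = g i x"
  using g_proj[OF assms, of x] by (metis blkproj_idem)

lemma P_g_other: assumes "i < N" "k \<noteq> i" shows "P k (g i x) = 0"
  using g_proj[OF assms(1), of x] assms(2) by (metis blkproj_other)

lemma g_lipP: assumes "i < N" shows "norm (g i x - g i y) \<le> L i * norm (P i (x - y))"
  using g_lip assms g_P[OF assms] by (metis blkproj_diff)

lemma g_inner_P: assumes "i < N" shows "g i x \<bullet> v = g i x \<bullet> P i v"
  using P_g[OF assms, of x] by (metis blkproj_inner)

lemma f_P: assumes "i < N" shows "f i (x + P i (y - x)) = f i y"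
proof -
  have "P i (x + P i (y - x)) = P i y" by (simp add: blkproj_add blkproj_diff)
  then show ?thesis using f_block assms by blast
qed

lemma P_sum_g: "P i (\<Sum>k<N. g k x) = (if i < N then g i x else 0)"
proof -
  have "P i (\<Sum>k<N. g k x) = (\<Sum>k<N. P i (g k x))" by (rule blkproj_sum)
  also have "\<dots> = (\<Sum>k<N. if k = i then g i x else 0)"
    by (rule sum.cong) (auto simp: P_g P_g_other)
  finally show ?thesis by simp
qed

lemma f_descent: assumes "i < N"
  shows "f i y \<le> f i x + g i x \<bullet> (y - x) + L i / 2 * (norm (P i (y - x)))\<^sup>2"
    and "f i y \<ge> f i x + g i x \<bullet> (y - x) - L i / 2 * (norm (y - x))\<^sup>2"
proof -
  have gd: "\<forall>x. GDERIV (f i) x :> g i x" and lip: "\<forall>x y. norm (g i x - g i y) \<le> L i * norm (x - y)"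
    using f_grad g_lip assms by auto
  have "f i (x + P i (y - x)) \<le> f i x + g i x \<bullet> ((x + P i (y - x)) - x) + L i / 2 * (norm ((x + P i (y - x)) - x))\<^sup>2"
    by (rule descent(1)[OF gd lip])
  then show "f i y \<le> f i x + g i x \<bullet> (y - x) + L i / 2 * (norm (P i (y - x)))\<^sup>2"
    using f_P[OF assms] g_inner_P[OF assms, of x "y - x"] by simp
  show "f i y \<ge> f i x + g i x \<bullet> (y - x) - L i / 2 * (norm (y - x))\<^sup>2"
    by (rule descent(2)[OF gd lip])
qed

end


lemma coercive_min:
  fixes h :: "real^'n::finite \<Rightarrow> ereal"
  assumes lsc: "lsc_fun h" and fin: "h z0 < \<infinity>" and k: "k > 0"
    and bd: "\<forall>w. ereal (c - b * norm (w - u) + k * (norm (w - u))\<^sup>2) \<le> h w"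
  shows "\<exists>p. \<forall>z. h p \<le> h z"
proof -
  define m where "m = (INF w. h w)"
  have lowq: "c - b\<^sup>2 / (4 * k) \<le> c - b * t + k * t\<^sup>2" for t
  proof -
    have "0 \<le> k * (t - b / (2 * k))\<^sup>2" using k by simp
    also have "k * (t - b / (2 * k))\<^sup>2 = k * t\<^sup>2 - b * t + b\<^sup>2 / (4 * k)"
      using k by (simp add: power2_eq_square field_simps)
    finally show ?thesis by simp
  qed
  have mlow: "ereal (c - b\<^sup>2 / (4 * k)) \<le> m"
    unfolding m_def
  proof (rule INF_greatest)
    fix w show "ereal (c - b\<^sup>2 / (4 * k)) \<le> h w"
      using bd lowq[of "norm (w - u)"] by (meson ereal_less_eq(3) order_trans)
  qed
  have mup: "m < \<infinity>" unfolding m_def using fin by (meson INF_lower UNIV_I le_less_trans)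
  obtain mr where mr: "m = ereal mr"
    using mlow mup by (cases m) auto
  have "\<forall>n::nat. \<exists>w. h w < ereal (mr + 1 / (real n + 1))"
  proof
    fix n :: nat
    have "m < ereal (mr + 1 / (real n + 1))" using mr by simp
    then show "\<exists>w. h w < ereal (mr + 1 / (real n + 1))"
      unfolding m_def by (simp add: INF_less_iff)
  qed
  then obtain W where W: "\<And>n. h (W n) < ereal (mr + 1 / (real n + 1))" by metis
  define A where "A = mr + 1 - c"
  define R where "R = max 1 ((\<bar>b\<bar> + \<bar>A\<bar>) / k)"
  have Wb: "norm (W n - u) \<le> R" for n
  proof (rule ccontr)
    assume "\<not> norm (W n - u) \<le> R"
    then have t1: "norm (W n - u) > 1" and t2: "norm (W n - u) > (\<bar>b\<bar> + \<bar>A\<bar>) / k"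
      unfolding R_def by auto
    define t where "t = norm (W n - u)"
    have "ereal (c - b * t + k * t\<^sup>2) < ereal (mr + 1 / (real n + 1))"
      unfolding t_def by (rule le_less_trans[OF bd[rule_format] W])
    then have "c - b * t + k * t\<^sup>2 < mr + 1 / (real n + 1)" by (simp only: less_ereal.simps)
    moreover have "1 / (real n + 1) \<le> 1" by (simp add: divide_le_eq_1)
    ultimately have kt: "k * t\<^sup>2 < b * t + A" unfolding A_def by linarith
    have tpos: "t > 1" using t1 unfolding t_def .
    have bt: "b * t \<le> \<bar>b\<bar> * t" by (rule mult_right_mono[OF abs_ge_self]) (use tpos in linarith)
    have "\<bar>A\<bar> * 1 \<le> \<bar>A\<bar> * t" by (rule mult_left_mono) (use tpos in linarith, simp)
    then have At: "A \<le> \<bar>A\<bar> * t" using abs_ge_self[of A] by linarith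
    have kk: "k * t\<^sup>2 = (k * t) * t" by (simp add: power2_eq_square mult.assoc)
    have e: "(\<bar>b\<bar> + \<bar>A\<bar>) * t = \<bar>b\<bar> * t + \<bar>A\<bar> * t" by (rule distrib_right)
    have "(k * t) * t < (\<bar>b\<bar> + \<bar>A\<bar>) * t" using kt bt At kk e by linarith
    then have "k * t < \<bar>b\<bar> + \<bar>A\<bar>" using tpos by (meson mult_right_less_imp_less less_imp_le order.strict_trans[OF zero_less_one])
    then have "t < (\<bar>b\<bar> + \<bar>A\<bar>) / k" using k by (simp add: pos_less_divide_eq mult.commute)
    then show False using t2 unfolding t_def by simp
  qed
  have "bounded (range W)"
    unfolding bounded_iff
  proof (intro exI ballI)
    fix x assume "x \<in> range W"
    then obtain n where x: "x = W n" by auto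
    have "norm x \<le> norm (W n - u) + norm u" unfolding x using norm_triangle_sub[of "W n" u] by (simp add: add.commute)
    then show "norm x \<le> R + norm u" using Wb[of n] by simp
  qed
  then obtain l r where r: "strict_mono r" and lim: "(W \<circ> r) \<longlonglongrightarrow> l"
    using bounded_imp_convergent_subsequence by blast
  have "h l \<le> liminf (\<lambda>n. h ((W \<circ> r) n))"
    using lsc lim unfolding lsc_fun_def by blast
  also have "\<dots> \<le> liminf (\<lambda>n. ereal (mr + 1 / (real n + 1)))"
  proof (rule Liminf_mono, rule always_eventually, rule allI)
    fix n
    have "n \<le> r n" using r by (rule seq_suble)
    then have "1 / (real (r n) + 1) \<le> 1 / (real n + 1)"
      by (intro divide_left_mono) auto
    then show "h ((W \<circ> r) n) \<le> ereal (mr + 1 / (real n + 1))"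
      using W[of "r n"] by (simp add: o_def) (meson ereal_less_eq(3) add_left_mono less_imp_le order_trans)
  qed
  also have "\<dots> = ereal mr"
  proof (rule lim_imp_Liminf)
    show "\<not> trivial_limit sequentially" by simp
    have "(\<lambda>n. 1 / (real n + 1)) \<longlonglongrightarrow> 0"
      using LIMSEQ_inverse_real_of_nat by (simp add: inverse_eq_divide add.commute)
    then have "(\<lambda>n. mr + 1 / (real n + 1)) \<longlonglongrightarrow> mr + 0" by (intro tendsto_intros)
    then show "(\<lambda>n. ereal (mr + 1 / (real n + 1))) \<longlonglongrightarrow> ereal mr"
      by (simp add: tendsto_ereal)
  qed
  finally have "h l \<le> m" using mr by simp
  then have "\<forall>z. h l \<le> h z" unfolding m_def by (meson INF_lower UNIV_I order_trans)
  then show ?thesis by blast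
qed


context setting begin

definition Fs where "Fs x = (\<Sum>i<N. f i x) / real N"
definition gFs where "gFs x = (1 / real N) *\<^sub>R (\<Sum>i<N. g i x)"
definition S where "S x = x - Gam blk \<gamma> (gFs x)"
definition Tm where "Tm x = proxG blk \<gamma> G (S x)"
definition ismin where "ismin u p \<longleftrightarrow> (\<forall>z. G p + ereal (normGinv2 blk \<gamma> (p - u) / 2)
                                  \<le> G z + ereal (normGinv2 blk \<gamma> (z - u) / 2))"

lemma Npos: "real N > 0" using N_pos by simp

lemma gFs_inner: "gFs x \<bullet> v = (\<Sum>i<N. g i x \<bullet> v) / real N"
  unfolding gFs_def by (simp add: inner_sum_left)

lemma F_upper: "Fs w \<le> Fs u + gFs u \<bullet> (w - u) + (\<Sum>i<N. L i / (2 * real N) * (norm (P i (w - u)))\<^sup>2)"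
proof -
  have "(\<Sum>i<N. f i w) \<le> (\<Sum>i<N. f i u + g i u \<bullet> (w - u) + L i / 2 * (norm (P i (w - u)))\<^sup>2)"
    by (rule sum_mono) (rule f_descent(1), simp)
  also have "\<dots> = (\<Sum>i<N. f i u) + (\<Sum>i<N. g i u \<bullet> (w - u)) + (\<Sum>i<N. L i / 2 * (norm (P i (w - u)))\<^sup>2)"
    by (simp add: sum.distrib)
  finally have "(\<Sum>i<N. f i w) / real N \<le> ((\<Sum>i<N. f i u) + (\<Sum>i<N. g i u \<bullet> (w - u)) + (\<Sum>i<N. L i / 2 * (norm (P i (w - u)))\<^sup>2)) / real N"
    using Npos by (rule divide_right_mono[OF _ less_imp_le])
  also have "\<dots> = Fs u + gFs u \<bullet> (w - u) + (\<Sum>i<N. L i / (2 * real N) * (norm (P i (w - u)))\<^sup>2)"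
    unfolding Fs_def gFs_inner add_divide_distrib sum_divide_distrib by simp
  finally show ?thesis unfolding Fs_def .
qed

lemma Pm_ex: "\<exists>pm. (\<forall>y. ereal pm \<le> ereal (Fs y) + G y)"
proof -
  obtain x0 where x0: "\<forall>y. ereal (Fs x0) + G x0 \<le> ereal (Fs y) + G y"
    using argmin unfolding Fs_def by blast
  obtain z0 where z0: "G z0 \<noteq> \<infinity>" using G_proper unfolding proper_fun_def by blast
  have "G x0 \<noteq> -\<infinity>" using G_proper unfolding proper_fun_def by blast
  moreover have "G x0 \<noteq> \<infinity>"
  proof
    assume "G x0 = \<infinity>"
    then have "ereal (Fs z0) + G z0 = \<infinity>" using x0[rule_format, of z0] by simp
    then show False using z0 G_proper unfolding proper_fun_def by (cases "G z0") auto
  qed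
  ultimately obtain gx where "G x0 = ereal gx" by (cases "G x0") auto
  then show ?thesis using x0 by (intro exI[of _ "Fs x0 + gx"]) simp
qed

definition pm where "pm = (SOME pm. \<forall>y. ereal pm \<le> ereal (Fs y) + G y)"

lemma pm: "ereal pm \<le> ereal (Fs y) + G y"
  using someI_ex[OF Pm_ex] unfolding pm_def by blast

lemma G_lower: "ereal (pm - Fs w) \<le> G w"
proof (cases "G w")
  case (real r) then show ?thesis using pm[of w] by simp
next
  case PInf then show ?thesis by simp
next
  case MInf then show ?thesis using G_proper unfolding proper_fun_def by blast
qed

definition kap where "kap = Min ((\<lambda>i. 1 / \<gamma> i - L i / real N) ` {..<N})"

lemma kap_pos: "kap > 0"
proof -
  have "0 \<in> {..<N}" using N_pos by simp
  then have ne: "{..<N} \<noteq> {}" by blast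
  have "1 / \<gamma> i - L i / real N > 0" if "i < N" for i
  proof -
    have gi: "\<gamma> i > 0" using \<gamma>_pos that by auto
    have "\<gamma> i * L i < real N" using \<gamma>_bound that by auto
    then have "L i / real N < 1 / \<gamma> i" using gi Npos by (simp add: field_simps)
    then show ?thesis by simp
  qed
  then show ?thesis unfolding kap_def using ne by (subst Min_gr_iff) auto
qed

lemma kap_le: "i < N \<Longrightarrow> kap \<le> 1 / \<gamma> i - L i / real N"
  unfolding kap_def by (intro Min_le) auto

lemma normGinv2_blocks: "normGinv2 blk \<gamma> v = (\<Sum>i<N. (norm (P i v))\<^sup>2 / \<gamma> i)"
  unfolding normGinv2_D by (rule normD_blocks)

lemma h_lower:
  "ereal (pm - Fs u - norm (gFs u) * norm (w - u) + kap / 2 * (norm (w - u))\<^sup>2)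
     \<le> G w + ereal (normGinv2 blk \<gamma> (w - u) / 2)"
proof -
  define e where "e = w - u"
  have fu: "Fs w \<le> Fs u + gFs u \<bullet> e + (\<Sum>i<N. L i / (2 * real N) * (norm (P i e))\<^sup>2)"
    unfolding e_def by (rule F_upper)
  have cs: "gFs u \<bullet> e \<le> norm (gFs u) * norm e" by (rule norm_cauchy_schwarz)
  have blk: "kap / 2 * (norm e)\<^sup>2 \<le> normGinv2 blk \<gamma> e / 2 - (\<Sum>i<N. L i / (2 * real N) * (norm (P i e))\<^sup>2)"
  proof -
    have "kap / 2 * (norm e)\<^sup>2 = (\<Sum>i<N. kap / 2 * (norm (P i e))\<^sup>2)"
      using norm_sq_blocks[OF blk_range, of e] by (simp add: sum_distrib_left)
    also have "\<dots> \<le> (\<Sum>i<N. (norm (P i e))\<^sup>2 / \<gamma> i / 2 - L i / (2 * real N) * (norm (P i e))\<^sup>2)"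
    proof (rule sum_mono)
      fix i assume "i \<in> {..<N}"
      then have k: "kap \<le> 1 / \<gamma> i - L i / real N" using kap_le by simp
      have "kap / 2 * (norm (P i e))\<^sup>2 \<le> (1 / \<gamma> i - L i / real N) / 2 * (norm (P i e))\<^sup>2"
        by (rule mult_right_mono) (use k in simp_all)
      also have "\<dots> = (norm (P i e))\<^sup>2 / \<gamma> i / 2 - L i / (2 * real N) * (norm (P i e))\<^sup>2"
        by (simp add: field_simps)
      finally show "kap / 2 * (norm (P i e))\<^sup>2 \<le> (norm (P i e))\<^sup>2 / \<gamma> i / 2 - L i / (2 * real N) * (norm (P i e))\<^sup>2" .
    qed
    also have "\<dots> = normGinv2 blk \<gamma> e / 2 - (\<Sum>i<N. L i / (2 * real N) * (norm (P i e))\<^sup>2)"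
      unfolding normGinv2_blocks by (simp add: sum_subtractf sum_divide_distrib)
    finally show ?thesis .
  qed
  have "pm - Fs u - norm (gFs u) * norm e + kap / 2 * (norm e)\<^sup>2 \<le> (pm - Fs w) + normGinv2 blk \<gamma> e / 2"
    using fu cs blk by linarith
  then have "ereal (pm - Fs u - norm (gFs u) * norm e + kap / 2 * (norm e)\<^sup>2) \<le> ereal (pm - Fs w) + ereal (normGinv2 blk \<gamma> e / 2)"
    by simp
  also have "\<dots> \<le> G w + ereal (normGinv2 blk \<gamma> e / 2)"
    by (rule add_right_mono[OF G_lower])
  finally show ?thesis unfolding e_def .
qed

lemma normGinv2_tendsto:
  assumes "X \<longlonglongrightarrow> x"
  shows "(\<lambda>k. normGinv2 blk \<gamma> (X k - u)) \<longlonglongrightarrow> normGinv2 blk \<gamma> (x - u)"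
  unfolding normGinv2_def
  by (intro tendsto_intros tendsto_vec_nth assms) (metis gpos less_irrefl)

lemma h_lsc: "lsc_fun (\<lambda>w. G w + ereal (normGinv2 blk \<gamma> (w - u) / 2))"
  unfolding lsc_fun_def
proof (intro allI impI)
  fix x X assume X: "X \<longlonglongrightarrow> (x::real^'n)"
  have q: "(\<lambda>k. ereal (normGinv2 blk \<gamma> (X k - u) / 2)) \<longlonglongrightarrow> ereal (normGinv2 blk \<gamma> (x - u) / 2)"
    by (intro tendsto_ereal tendsto_divide normGinv2_tendsto X tendsto_const) simp
  have "G x \<le> liminf (\<lambda>k. G (X k))" using G_lsc X unfolding lsc_fun_def by blast
  then have "ereal (normGinv2 blk \<gamma> (x - u) / 2) + G x \<le> ereal (normGinv2 blk \<gamma> (x - u) / 2) + liminf (\<lambda>k. G (X k))"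
    by (rule add_left_mono)
  also have "\<dots> = liminf (\<lambda>k. ereal (normGinv2 blk \<gamma> (X k - u) / 2) + G (X k))"
    by (rule ereal_liminf_lim_add[symmetric, OF q]) simp
  finally show "G x + ereal (normGinv2 blk \<gamma> (x - u) / 2) \<le> liminf (\<lambda>k. G (X k) + ereal (normGinv2 blk \<gamma> (X k - u) / 2))"
    by (simp add: add.commute)
qed

end


lemma parallelogram_half:
  fixes a b :: "'a::real_inner"
  shows "(norm ((1/2) *\<^sub>R (a + b)))\<^sup>2 = ((norm a)\<^sup>2 + (norm b)\<^sup>2) / 2 - (norm (a - b))\<^sup>2 / 4"
  by (simp add: power2_norm_eq_inner inner_add_left inner_add_right inner_diff_left
      inner_diff_right inner_commute algebra_simps add_divide_distrib diff_divide_distrib)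

context setting begin

lemma ismin_fin: assumes "ismin u p" shows "\<exists>gp. G p = ereal gp"
proof -
  obtain z0 where z0: "G z0 \<noteq> \<infinity>" using G_proper unfolding proper_fun_def by blast
  have "G p + ereal (normGinv2 blk \<gamma> (p - u) / 2) \<le> G z0 + ereal (normGinv2 blk \<gamma> (z0 - u) / 2)"
    using assms unfolding ismin_def by blast
  moreover have "G z0 + ereal (normGinv2 blk \<gamma> (z0 - u) / 2) < \<infinity>" using z0 by simp
  ultimately have "G p \<noteq> \<infinity>" by auto
  moreover have "G p \<noteq> -\<infinity>" using G_proper unfolding proper_fun_def by blast
  ultimately show ?thesis by (cases "G p") auto
qed

lemma prox_exists: "\<exists>p. ismin u p"
proof -
  obtain z0 where z0: "G z0 \<noteq> \<infinity>" using G_proper unfolding proper_fun_def by blast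
  have fin: "G z0 + ereal (normGinv2 blk \<gamma> (z0 - u) / 2) < \<infinity>" using z0 by simp
  have k: "kap / 2 > 0" using kap_pos by simp
  have "\<exists>p. \<forall>z. G p + ereal (normGinv2 blk \<gamma> (p - u) / 2) \<le> G z + ereal (normGinv2 blk \<gamma> (z - u) / 2)"
    by (rule coercive_min[OF h_lsc fin k, where c = "pm - Fs u" and b = "norm (gFs u)" and u = u])
      (intro allI, rule h_lower)
  then show ?thesis unfolding ismin_def .
qed

lemma prox_unique: assumes p1: "ismin u p1" and p2: "ismin u p2" shows "p1 = p2"
proof -
  obtain g1 where g1: "G p1 = ereal g1" using ismin_fin[OF p1] by blast
  obtain g2 where g2: "G p2 = ereal g2" using ismin_fin[OF p2] by blast
  define a where "a = D (p1 - u)"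
  define b where "b = D (p2 - u)"
  define q where "q = (1 - 1/2) *\<^sub>R p1 + (1/2) *\<^sub>R p2"
  have n1: "normGinv2 blk \<gamma> (p1 - u) = (norm a)\<^sup>2" unfolding a_def normGinv2_D ..
  have n2: "normGinv2 blk \<gamma> (p2 - u) = (norm b)\<^sup>2" unfolding b_def normGinv2_D ..
  have qu: "q - u = (1/2) *\<^sub>R ((p1 - u) + (p2 - u))" unfolding q_def by (simp add: vec_eq_iff field_simps)
  have dq: "D (q - u) = (1/2) *\<^sub>R (a + b)" unfolding a_def b_def qu Dm_scaleR Dm_add ..
  have nq: "normGinv2 blk \<gamma> (q - u) = ((norm a)\<^sup>2 + (norm b)\<^sup>2) / 2 - (norm (a - b))\<^sup>2 / 4"
    unfolding normGinv2_D dq by (rule parallelogram_half)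
  have e12: "g1 + (norm a)\<^sup>2 / 2 \<le> g2 + (norm b)\<^sup>2 / 2"
    using p1 g1 g2 n1 n2 unfolding ismin_def by (metis ereal_less_eq(3) plus_ereal.simps(1))
  have e21: "g2 + (norm b)\<^sup>2 / 2 \<le> g1 + (norm a)\<^sup>2 / 2"
    using p2 g1 g2 n1 n2 unfolding ismin_def by (metis ereal_less_eq(3) plus_ereal.simps(1))
  have cq: "G q \<le> ereal (1 - 1/2) * G p1 + ereal (1/2) * G p2"
    unfolding q_def by (rule G_convex[unfolded convex_fun_def, rule_format, of "1/2" p1 p2]) simp
  then have cq': "G q \<le> ereal (g1 / 2 + g2 / 2)" using g1 g2 by simp
  have "G p1 + ereal (normGinv2 blk \<gamma> (p1 - u) / 2) \<le> G q + ereal (normGinv2 blk \<gamma> (q - u) / 2)"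
    using p1 unfolding ismin_def by blast
  also have "\<dots> \<le> ereal (g1 / 2 + g2 / 2) + ereal (normGinv2 blk \<gamma> (q - u) / 2)"
    by (rule add_right_mono[OF cq'])
  finally have "g1 + (norm a)\<^sup>2 / 2 \<le> g1 / 2 + g2 / 2 + normGinv2 blk \<gamma> (q - u) / 2"
    using g1 n1 by simp
  moreover have "(((norm a)\<^sup>2 + (norm b)\<^sup>2) / 2 - (norm (a - b))\<^sup>2 / 4) / 2
     = (norm a)\<^sup>2 / 4 + (norm b)\<^sup>2 / 4 - (norm (a - b))\<^sup>2 / 8" by (simp add: field_simps)
  ultimately have "(norm (a - b))\<^sup>2 \<le> 0" using e12 e21 unfolding nq by linarith
  then have "a - b = 0" by simp
  then have "D (p1 - p2) = 0" unfolding a_def b_def by (simp add: Dm_diff[symmetric])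
  then show ?thesis using D_zero by simp
qed

lemma prox_is: "ismin u (proxG blk \<gamma> G u)"
proof -
  have "\<exists>!p. ismin u p" using prox_exists prox_unique by blast
  then show ?thesis unfolding proxG_def ismin_def[symmetric] by (rule theI')
qed

end


lemma norm_add_scale_sq:
  fixes a b :: "'a::real_inner"
  shows "(norm (a + t *\<^sub>R b))\<^sup>2 = (norm a)\<^sup>2 + 2 * t * (a \<bullet> b) + t\<^sup>2 * (norm b)\<^sup>2"
  unfolding power2_norm_eq_inner
  by (simp add: inner_add_left inner_add_right inner_commute power2_eq_square algebra_simps)

context setting begin

lemma prox_fin: "\<exists>gp. G (proxG blk \<gamma> G u) = ereal gp"
  by (rule ismin_fin[OF prox_is])

lemma prox_var_real:
  assumes gp: "G p = ereal gp" and gz: "G z = ereal gz" and pm: "ismin u p"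
  shows "gz \<ge> gp + D (u - p) \<bullet> D (z - p)"
proof -
  define a where "a = D (p - u)"
  define b where "b = D (z - p)"
  have key: "0 \<le> gz - gp + a \<bullet> b + t / 2 * (norm b)\<^sup>2" if t: "0 < t" "t < 1" for t
  proof -
    define zt where "zt = (1 - t) *\<^sub>R p + t *\<^sub>R z"
    have cz: "G zt \<le> ereal (1 - t) * G p + ereal t * G z"
      unfolding zt_def by (rule G_convex[unfolded convex_fun_def, rule_format, of t p z]) (use t in simp)
    then have cz': "G zt \<le> ereal ((1 - t) * gp + t * gz)" using gp gz by simp
    have "zt - u = (p - u) + t *\<^sub>R (z - p)" unfolding zt_def by (simp add: vec_eq_iff algebra_simps)
    then have dz: "D (zt - u) = a + t *\<^sub>R b" unfolding a_def b_def by (simp only: Dm_add Dm_scaleR)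
    have nz: "normGinv2 blk \<gamma> (zt - u) = (norm a)\<^sup>2 + 2 * t * (a \<bullet> b) + t\<^sup>2 * (norm b)\<^sup>2"
      unfolding normGinv2_D dz by (rule norm_add_scale_sq)
    have "G p + ereal (normGinv2 blk \<gamma> (p - u) / 2) \<le> G zt + ereal (normGinv2 blk \<gamma> (zt - u) / 2)"
      using pm unfolding ismin_def by blast
    also have "\<dots> \<le> ereal ((1 - t) * gp + t * gz) + ereal (normGinv2 blk \<gamma> (zt - u) / 2)"
      by (rule add_right_mono[OF cz'])
    finally have "gp + normGinv2 blk \<gamma> (p - u) / 2 \<le> (1 - t) * gp + t * gz + normGinv2 blk \<gamma> (zt - u) / 2"
      using gp by simp
    moreover have na: "normGinv2 blk \<gamma> (p - u) = (norm a)\<^sup>2" unfolding a_def normGinv2_D ..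
    ultimately have "gp + (norm a)\<^sup>2 / 2 \<le> (1 - t) * gp + t * gz + ((norm a)\<^sup>2 + 2 * t * (a \<bullet> b) + t\<^sup>2 * (norm b)\<^sup>2) / 2"
      using nz by (simp only: na nz)
    then have "t * 0 \<le> t * (gz - gp + a \<bullet> b + t / 2 * (norm b)\<^sup>2)"
      by (simp add: algebra_simps power2_eq_square add_divide_distrib)
    then show ?thesis using t by (simp add: zero_le_mult_iff)
  qed
  have "0 \<le> gz - gp + a \<bullet> b"
  proof (rule ccontr)
    assume "\<not> 0 \<le> gz - gp + a \<bullet> b"
    then have eps: "gz - gp + a \<bullet> b < 0" by simp
    define \<epsilon> where "\<epsilon> = - (gz - gp + a \<bullet> b)"
    have ep: "\<epsilon> > 0" using eps unfolding \<epsilon>_def by simp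
    define t where "t = min (1/2) (\<epsilon> / ((norm b)\<^sup>2 + 1))"
    have bp: "(norm b)\<^sup>2 + 1 > 0" using zero_le_power2[of "norm b"] by linarith
    have q: "\<epsilon> / ((norm b)\<^sup>2 + 1) > 0" by (rule divide_pos_pos[OF ep bp])
    have t0: "0 < t" "t < 1" unfolding t_def using q by auto
    have "t \<le> \<epsilon> / ((norm b)\<^sup>2 + 1)" unfolding t_def by simp
    then have "t * ((norm b)\<^sup>2 + 1) \<le> \<epsilon>" using bp by (simp add: pos_le_divide_eq)
    then have "t * (norm b)\<^sup>2 < \<epsilon>" using t0 by (simp add: algebra_simps)
    then have "t / 2 * (norm b)\<^sup>2 < \<epsilon>" using t0 ep by (simp add: field_simps)
    then show False using key[OF t0] unfolding \<epsilon>_def by linarith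
  qed
  moreover have "D (u - p) = - a" unfolding a_def by (simp add: Dm_diff)
  ultimately show ?thesis unfolding b_def by simp
qed

lemma prox_nonexp: "norm (D (proxG blk \<gamma> G u1 - proxG blk \<gamma> G u2)) \<le> norm (D (u1 - u2))"
proof -
  define p1 where "p1 = proxG blk \<gamma> G u1"
  define p2 where "p2 = proxG blk \<gamma> G u2"
  obtain g1 where g1: "G p1 = ereal g1" using prox_fin unfolding p1_def by blast
  obtain g2 where g2: "G p2 = ereal g2" using prox_fin unfolding p2_def by blast
  have v1: "g2 \<ge> g1 + D (u1 - p1) \<bullet> D (p2 - p1)"
    by (rule prox_var_real[OF g1 g2]) (unfold p1_def, rule prox_is)
  have v2: "g1 \<ge> g2 + D (u2 - p2) \<bullet> D (p1 - p2)"
    by (rule prox_var_real[OF g2 g1]) (unfold p2_def, rule prox_is)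
  define c where "c = D p1 - D p2"
  define e where "e = D u1 - D u2"
  have "0 \<ge> D (u1 - p1) \<bullet> D (p2 - p1) + D (u2 - p2) \<bullet> D (p1 - p2)" using v1 v2 by linarith
  then have "c \<bullet> c \<le> e \<bullet> c" unfolding c_def e_def Dm_diff
    by (simp add: inner_diff_left inner_diff_right inner_commute)
  also have "\<dots> \<le> norm e * norm c" by (rule norm_cauchy_schwarz)
  finally have "norm c * norm c \<le> norm e * norm c" by (simp add: power2_norm_eq_inner[symmetric] power2_eq_square)
  then have "norm c \<le> norm e"
    by (metis mult_right_le_imp_le norm_ge_zero order.not_eq_order_implies_strict zero_less_norm_iff order_refl mult_zero_right)
  then show ?thesis unfolding c_def e_def p1_def p2_def Dm_diff .
qed

end


context setting begin

lemma P_gFs: "i < N \<Longrightarrow> P i (gFs x) = (1 / real N) *\<^sub>R g i x"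
  unfolding gFs_def by (simp add: blkproj_scaleR P_sum_g)

lemma P_S: assumes i: "i < N" shows "P i (S x) = P i x - (\<gamma> i / real N) *\<^sub>R g i x"
  unfolding S_def blkproj_diff P_Gam P_gFs[OF i] by simp

lemma P_S_diff: assumes i: "i < N"
  shows "P i (S x - S y) = P i (x - y) - (\<gamma> i / real N) *\<^sub>R (g i x - g i y)"
  unfolding blkproj_diff P_S[OF i] by (simp add: algebra_simps)

lemma tL_lt1: assumes i: "i < N" shows "\<gamma> i / real N * L i < 1"
proof -
  have "\<gamma> i * L i < real N" using \<gamma>_bound i by auto
  then show ?thesis using Npos by (simp add: field_simps)
qed

lemma S_blk2: assumes i: "i < N" shows "norm (P i (S x - S y)) \<le> 2 * norm (P i (x - y))"
proof -
  have t0: "\<gamma> i / real N \<ge> 0" using \<gamma>_pos i Npos by (simp add: less_imp_le)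
  have "norm (P i (S x - S y)) \<le> norm (P i (x - y)) + norm ((\<gamma> i / real N) *\<^sub>R (g i x - g i y))"
    unfolding P_S_diff[OF i] by (rule norm_triangle_ineq4)
  also have "norm ((\<gamma> i / real N) *\<^sub>R (g i x - g i y)) = (\<gamma> i / real N) * norm (g i x - g i y)"
    using t0 by (simp only: norm_scaleR abs_of_nonneg)
  also have "\<dots> \<le> (\<gamma> i / real N) * (L i * norm (P i (x - y)))"
    by (rule mult_left_mono[OF g_lipP[OF i] t0])
  also have "\<dots> = (\<gamma> i / real N * L i) * norm (P i (x - y))" by simp
  also have "\<dots> \<le> 1 * norm (P i (x - y))"
    by (rule mult_right_mono) (use tL_lt1[OF i] in simp_all)
  finally show ?thesis by simp
qed

lemma T_lip2: "norm (D (Tm x - Tm y)) \<le> 2 * norm (D (x - y))"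
proof -
  have "norm (D (Tm x - Tm y)) \<le> norm (D (S x - S y))"
    unfolding Tm_def by (rule prox_nonexp)
  also have "\<dots> \<le> 2 * norm (D (x - y))"
    by (rule block_lip) (use S_blk2 in auto)
  finally show ?thesis .
qed

end


lemma norm_comb_sq:
  fixes d e :: "'a::real_inner"
  shows "(norm (c *\<^sub>R d - t *\<^sub>R e))\<^sup>2 = c\<^sup>2 * (norm d)\<^sup>2 - 2 * c * t * (d \<bullet> e) + t\<^sup>2 * (norm e)\<^sup>2"
  unfolding power2_norm_eq_inner
  by (simp add: inner_diff_left inner_diff_right inner_commute power2_eq_square algebra_simps)

context setting begin

lemma sc_grad:
  assumes i: "i < N" and cv: "convex_on UNIV (\<lambda>x. f i x - \<mu> / 2 * (norm (P i x))\<^sup>2)"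
  shows "f i z \<ge> f i x + g i x \<bullet> (z - x) + \<mu> / 2 * (norm (P i (z - x)))\<^sup>2"
proof -
  define d where "d = z - x"
  define A where "A = (norm (P i x))\<^sup>2"
  define B where "B = P i x \<bullet> P i d"
  define C where "C = (norm (P i d))\<^sup>2"
  define \<psi> where "\<psi> = (\<lambda>t. f i (x + t *\<^sub>R d) - \<mu> / 2 * (norm (P i (x + t *\<^sub>R d)))\<^sup>2)"
  have eq: "\<psi> = (\<lambda>t. f i (x + t *\<^sub>R d) - \<mu> / 2 * (A + 2 * t * B + t\<^sup>2 * C))"
  proof
    fix t
    have "P i (x + t *\<^sub>R d) = P i x + t *\<^sub>R P i d" by (simp add: blkproj_add blkproj_scaleR)
    then show "\<psi> t = f i (x + t *\<^sub>R d) - \<mu> / 2 * (A + 2 * t * B + t\<^sup>2 * C)"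
      unfolding \<psi>_def A_def B_def C_def by (simp only: norm_add_scale_sq)
  qed
  have cvx: "convex_on UNIV \<psi>"
  proof (rule convex_onI)
    fix s a b :: real assume s: "0 < s" "s < 1"
    have "x + ((1 - s) *\<^sub>R a + s *\<^sub>R b) *\<^sub>R d = (1 - s) *\<^sub>R (x + a *\<^sub>R d) + s *\<^sub>R (x + b *\<^sub>R d)"
      by (simp add: vec_eq_iff algebra_simps)
    then show "\<psi> ((1 - s) *\<^sub>R a + s *\<^sub>R b) \<le> (1 - s) * \<psi> a + s * \<psi> b"
      unfolding \<psi>_def using convex_onD[OF cv, of s "x + a *\<^sub>R d" "x + b *\<^sub>R d"] s by simp
  qed simp
  have dv: "(\<psi> has_real_derivative (g i x \<bullet> d - \<mu> / 2 * (2 * B))) (at 0)"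
  proof -
    have lf: "((\<lambda>t. f i (x + t *\<^sub>R d)) has_real_derivative (g i (x + 0 *\<^sub>R d) \<bullet> d)) (at 0)"
      by (rule line_deriv) (use f_grad i in auto)
    have "((\<lambda>t. f i (x + t *\<^sub>R d) - \<mu> / 2 * (A + 2 * t * B + t\<^sup>2 * C)) has_real_derivative
            (g i (x + 0 *\<^sub>R d) \<bullet> d - \<mu> / 2 * (0 + 2 * 1 * B + (2 * 0 * 1) * C))) (at 0)"
      by (intro derivative_intros lf) (auto intro!: derivative_eq_intros)
    then show ?thesis unfolding eq by simp
  qed
  have "\<psi> 1 - \<psi> 0 \<ge> (g i x \<bullet> d - \<mu> / 2 * (2 * B)) * (1 - 0)"
    by (rule convex_on_imp_above_tangent[OF cvx]) (use dv in \<open>auto simp: has_field_derivative_at_within\<close>)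
  moreover have "\<psi> 1 = f i z - \<mu> / 2 * (A + 2 * B + C)" unfolding eq d_def by simp
  moreover have "\<psi> 0 = f i x - \<mu> / 2 * A" unfolding eq by simp
  ultimately have "f i z - \<mu> / 2 * (A + 2 * B + C) - (f i x - \<mu> / 2 * A) \<ge> g i x \<bullet> d - \<mu> * B" by simp
  then show ?thesis unfolding C_def d_def by (simp add: algebra_simps)
qed


lemma mu_le_L:
  assumes i: "i < N" and cv: "convex_on UNIV (\<lambda>x. f i x - \<mu> / 2 * (norm (P i x))\<^sup>2)"
  shows "\<mu> \<le> L i"
proof -
  obtain j where j: "blk j = i" using blk_nonempty i by blast
  define e :: "real^'n" where "e = axis j 1"
  have Pe: "P i e = e" unfolding e_def using j by (simp add: vec_eq_iff axis_def)
  have ne: "norm e = 1" unfolding e_def by simp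
  have "f i (x + e) \<ge> f i x + g i x \<bullet> (x + e - x) + \<mu> / 2 * (norm (P i (x + e - x)))\<^sup>2"
    by (rule sc_grad[OF i cv])
  moreover have "f i (x + e) \<le> f i x + g i x \<bullet> (x + e - x) + L i / 2 * (norm (P i (x + e - x)))\<^sup>2"
    by (rule f_descent(1)[OF i])
  ultimately have "\<mu> / 2 * (norm (P i e))\<^sup>2 \<le> L i / 2 * (norm (P i e))\<^sup>2" by simp
  then show ?thesis using Pe ne by simp
qed

lemma cocoer:
  assumes i: "i < N" and cv: "convex_on UNIV (\<lambda>x. f i x - \<mu> / 2 * (norm (P i x))\<^sup>2)"
    and M: "M > 0" "M \<ge> L i - \<mu>"
  shows "(norm ((g i a - \<mu> *\<^sub>R P i a) - (g i b - \<mu> *\<^sub>R P i b)))\<^sup>2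
           \<le> M * (((g i a - \<mu> *\<^sub>R P i a) - (g i b - \<mu> *\<^sub>R P i b)) \<bullet> (a - b))"
proof -
  define H where "H = (\<lambda>z. f i z - \<mu> / 2 * (norm (P i z))\<^sup>2)"
  define dH where "dH = (\<lambda>z. g i z - \<mu> *\<^sub>R P i z)"
  have sq: "(norm (P i w))\<^sup>2 = (norm (P i z))\<^sup>2 + 2 * (P i z \<bullet> (w - z)) + (norm (P i (w - z)))\<^sup>2" for z w
  proof -
    have "P i w = P i z + 1 *\<^sub>R P i (w - z)" by (simp add: blkproj_diff)
    then have "(norm (P i w))\<^sup>2 = (norm (P i z))\<^sup>2 + 2 * 1 * (P i z \<bullet> P i (w - z)) + 1\<^sup>2 * (norm (P i (w - z)))\<^sup>2"
      by (simp only: norm_add_scale_sq)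
    moreover have "P i z \<bullet> P i (w - z) = P i z \<bullet> (w - z)"
      by (metis blkproj_idem blkproj_inner)
    ultimately show ?thesis by simp
  qed
  have dHi: "dH z \<bullet> v = g i z \<bullet> v - \<mu> * (P i z \<bullet> v)" for z v
    unfolding dH_def by (simp add: inner_diff_left)
  have H1: "H w \<ge> H z + dH z \<bullet> (w - z)" for z w
  proof -
    have "f i w \<ge> f i z + g i z \<bullet> (w - z) + \<mu> / 2 * (norm (P i (w - z)))\<^sup>2"
      by (rule sc_grad[OF i cv])
    then show ?thesis unfolding H_def dHi sq[of w z] by (simp add: algebra_simps)
  qed
  have H2: "H (z + v) \<le> H z + dH z \<bullet> v + M / 2 * (norm v)\<^sup>2" if Pv: "P i v = v" for z v
  proof -
    have "f i (z + v) \<le> f i z + g i z \<bullet> (z + v - z) + L i / 2 * (norm (P i (z + v - z)))\<^sup>2"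
      by (rule f_descent(1)[OF i])
    then have fd: "f i (z + v) \<le> f i z + g i z \<bullet> v + L i / 2 * (norm v)\<^sup>2" using Pv by simp
    have "(L i - \<mu>) / 2 * (norm v)\<^sup>2 \<le> M / 2 * (norm v)\<^sup>2"
      by (rule mult_right_mono) (use M in simp_all)
    moreover have "H (z + v) = f i (z + v) - \<mu> / 2 * ((norm (P i z))\<^sup>2 + 2 * (P i z \<bullet> v) + (norm v)\<^sup>2)"
      unfolding H_def sq[of "z + v" z] using Pv by simp
    ultimately show ?thesis using fd unfolding H_def dHi by (simp add: algebra_simps)
  qed
  have Pg: "P i (dH z) = dH z" for z
    unfolding dH_def blkproj_diff blkproj_scaleR P_g[OF i] by simp
  have half: "H b - H a + dH b \<bullet> (a - b) \<le> - (norm (dH a - dH b))\<^sup>2 / (2 * M)" for a b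
  proof -
    define \<Delta> where "\<Delta> = dH a - dH b"
    define v where "v = (- 1 / M) *\<^sub>R \<Delta>"
    have Pv: "P i v = v" unfolding v_def \<Delta>_def blkproj_scaleR blkproj_diff Pg ..
    have h1: "H (a + v) \<ge> H b + dH b \<bullet> (a + v - b)" by (rule H1)
    have h2: "H (a + v) \<le> H a + dH a \<bullet> v + M / 2 * (norm v)\<^sup>2" by (rule H2[OF Pv])
    have "H b - H a + dH b \<bullet> (a - b) \<le> (dH a - dH b) \<bullet> v + M / 2 * (norm v)\<^sup>2"
      using h1 h2 by (simp add: inner_diff_left inner_diff_right inner_add_right algebra_simps)
    also have "(dH a - dH b) \<bullet> v = - (norm \<Delta>)\<^sup>2 / M"
      unfolding v_def \<Delta>_def by (simp add: power2_norm_eq_inner)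
    also have "M / 2 * (norm v)\<^sup>2 = (norm \<Delta>)\<^sup>2 / (2 * M)"
      unfolding v_def using M by (simp add: power2_eq_square field_simps)
    finally show ?thesis unfolding \<Delta>_def using M by (simp add: field_simps)
  qed
  have ha: "H b - H a + dH b \<bullet> (a - b) \<le> - (norm (dH a - dH b))\<^sup>2 / (2 * M)" by (rule half)
  have hb: "H a - H b + dH a \<bullet> (b - a) \<le> - (norm (dH a - dH b))\<^sup>2 / (2 * M)"
    using half[where a = b and b = a] by (simp add: norm_minus_commute)
  have "(norm (dH a - dH b))\<^sup>2 / M \<le> (dH a - dH b) \<bullet> (a - b)"
  proof -
    have "dH b \<bullet> (a - b) + dH a \<bullet> (b - a) \<le> - (norm (dH a - dH b))\<^sup>2 / M"
      using ha hb by (simp add: field_simps)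
    then show ?thesis by (simp add: inner_diff_left inner_diff_right algebra_simps)
  qed
  then show ?thesis unfolding dH_def using M by (simp add: field_simps)
qed

end


context setting begin

lemma S_blk_sc:
  assumes i: "i < N" and mu: "\<mu> > 0" and cv: "convex_on UNIV (\<lambda>x. f i x - \<mu> / 2 * (norm (P i x))\<^sup>2)"
  shows "norm (P i (S x - S y)) \<le> (1 - \<gamma> i / real N * \<mu>) * norm (P i (x - y))"
proof -
  define t where "t = \<gamma> i / real N"
  have t0: "t > 0" unfolding t_def using \<gamma>_pos i Npos by simp
  have tL: "t * L i < 1" unfolding t_def by (rule tL_lt1[OF i])
  have muL: "\<mu> \<le> L i" by (rule mu_le_L[OF i cv])
  have "t * \<mu> \<le> t * L i" using muL t0 by (simp add: mult_left_mono)
  then have tmu: "t * \<mu> < 1" using tL by linarith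
  define c where "c = 1 - t * \<mu>"
  have c0: "c > 0" unfolding c_def using tmu by simp
  define M where "M = 2 * c / t"
  have M0: "M > 0" unfolding M_def using c0 t0 by simp
  have hML: "M \<ge> L i - \<mu>"
  proof -
    have "t * (L i - \<mu>) \<le> 2 * c" unfolding c_def using tL tmu t0 mu by (simp add: algebra_simps)
    then show ?thesis unfolding M_def using t0 by (simp add: field_simps)
  qed
  define d where "d = P i (x - y)"
  define \<Delta> where "\<Delta> = (g i x - \<mu> *\<^sub>R P i x) - (g i y - \<mu> *\<^sub>R P i y)"
  have co: "(norm \<Delta>)\<^sup>2 \<le> M * (\<Delta> \<bullet> (x - y))" unfolding \<Delta>_def by (rule cocoer[OF i cv M0 hML])
  have PD: "P i \<Delta> = \<Delta>" unfolding \<Delta>_def blkproj_diff blkproj_scaleR P_g[OF i] by simp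
  have Dd: "\<Delta> \<bullet> (x - y) = \<Delta> \<bullet> d" unfolding d_def by (metis PD blkproj_inner)
  have eqv: "P i (S x - S y) = c *\<^sub>R d - t *\<^sub>R \<Delta>"
    unfolding P_S_diff[OF i] t_def[symmetric] c_def d_def \<Delta>_def
    by (simp add: algebra_simps blkproj_diff)
  have "(norm (P i (S x - S y)))\<^sup>2 = c\<^sup>2 * (norm d)\<^sup>2 - 2 * c * t * (d \<bullet> \<Delta>) + t\<^sup>2 * (norm \<Delta>)\<^sup>2"
    unfolding eqv by (rule norm_comb_sq)
  also have "\<dots> \<le> (c * norm d)\<^sup>2"
  proof -
    have "t\<^sup>2 * (norm \<Delta>)\<^sup>2 \<le> t\<^sup>2 * (M * (\<Delta> \<bullet> d))" using co Dd by (intro mult_left_mono) simp_all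
    also have "t\<^sup>2 * (M * (\<Delta> \<bullet> d)) = 2 * c * t * (d \<bullet> \<Delta>)"
      unfolding M_def using t0 by (simp add: power2_eq_square inner_commute field_simps)
    finally show ?thesis by (simp add: power_mult_distrib)
  qed
  finally have "(norm (P i (S x - S y)))\<^sup>2 \<le> (c * norm d)\<^sup>2" .
  then have "norm (P i (S x - S y)) \<le> c * norm d" by (rule power2_le_imp_le) (use c0 in simp)
  then show ?thesis unfolding c_def t_def d_def .
qed

lemma T_lip_sc:
  assumes sc: "\<forall>i<N. \<mu> i > 0 \<and> convex_on UNIV (\<lambda>x. f i x - \<mu> i / 2 * (norm (P i x))\<^sup>2)"
  shows "0 \<le> 1 - Min ((\<lambda>i. \<gamma> i * \<mu> i) ` {..<N}) / real N"
    and "norm (D (Tm x - Tm y)) \<le> (1 - Min ((\<lambda>i. \<gamma> i * \<mu> i) ` {..<N}) / real N) * norm (D (x - y))"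
proof -
  define \<delta> where "\<delta> = Min ((\<lambda>i. \<gamma> i * \<mu> i) ` {..<N}) / real N"
  have dl: "\<delta> \<le> \<gamma> i / real N * \<mu> i" if i: "i < N" for i
  proof -
    have "Min ((\<lambda>i. \<gamma> i * \<mu> i) ` {..<N}) \<le> \<gamma> i * \<mu> i" using i by (intro Min_le) auto
    then show ?thesis unfolding \<delta>_def using Npos by (simp add: divide_right_mono)
  qed
  have lt1: "\<gamma> i / real N * \<mu> i < 1" if i: "i < N" for i
  proof -
    have "\<mu> i \<le> L i" using mu_le_L[OF i] sc i by blast
    then have "\<gamma> i / real N * \<mu> i \<le> \<gamma> i / real N * L i"
    proof (rule mult_left_mono)
      show "0 \<le> \<gamma> i / real N" using \<gamma>_pos i Npos by (simp add: less_imp_le)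
    qed
    then show ?thesis using tL_lt1[OF i] by linarith
  qed
  have i0: "0 < N" using N_pos by simp
  show d1: "0 \<le> 1 - Min ((\<lambda>i. \<gamma> i * \<mu> i) ` {..<N}) / real N"
    using dl[OF i0] lt1[OF i0] unfolding \<delta>_def by linarith
  have "norm (D (Tm x - Tm y)) \<le> norm (D (S x - S y))"
    unfolding Tm_def by (rule prox_nonexp)
  also have "\<dots> \<le> (1 - \<delta>) * norm (D (x - y))"
  proof (rule block_lip)
    show "0 \<le> 1 - \<delta>" using d1 unfolding \<delta>_def .
    show "\<forall>i<N. norm (P i (S x - S y)) \<le> (1 - \<delta>) * norm (P i (x - y))"
    proof (intro allI impI)
      fix i assume i: "i < N"
      have "norm (P i (S x - S y)) \<le> (1 - \<gamma> i / real N * \<mu> i) * norm (P i (x - y))"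
        using S_blk_sc[OF i] sc i by blast
      also have "\<dots> \<le> (1 - \<delta>) * norm (P i (x - y))"
        using dl[OF i] by (intro mult_right_mono) simp_all
      finally show "norm (P i (S x - S y)) \<le> (1 - \<delta>) * norm (P i (x - y))" .
    qed
  qed
  finally show "norm (D (Tm x - Tm y)) \<le> (1 - Min ((\<lambda>i. \<gamma> i * \<mu> i) ` {..<N}) / real N) * norm (D (x - y))"
    unfolding \<delta>_def .
qed

end


context setting begin

definition Gr where "Gr w = real_of_ereal (G w)"
definition FB where "FB x = Fs x + gFs x \<bullet> (Tm x - x) + Gr (Tm x) + normGinv2 blk \<gamma> (Tm x - x) / 2"

lemma G_Tm: "G (Tm x) = ereal (Gr (Tm x))"
proof -
  obtain gp where "G (Tm x) = ereal gp" unfolding Tm_def using prox_fin by blast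
  then show ?thesis unfolding Gr_def by simp
qed

lemma normGinv2_shift:
  "normGinv2 blk \<gamma> (w - S x) = normGinv2 blk \<gamma> (w - x) + 2 * (gFs x \<bullet> (w - x)) + normGinv2 blk \<gamma> (Gam blk \<gamma> (gFs x))"
proof -
  have "w - S x = (w - x) + 1 *\<^sub>R Gam blk \<gamma> (gFs x)" unfolding S_def by simp
  then have "D (w - S x) = D (w - x) + 1 *\<^sub>R D (Gam blk \<gamma> (gFs x))" by (simp only: Dm_add Dm_scaleR)
  then have "(norm (D (w - S x)))\<^sup>2 = (norm (D (w - x)))\<^sup>2 + 2 * 1 * (D (w - x) \<bullet> D (Gam blk \<gamma> (gFs x))) + 1\<^sup>2 * (norm (D (Gam blk \<gamma> (gFs x))))\<^sup>2"
    by (simp only: norm_add_scale_sq)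
  then show ?thesis unfolding normGinv2_D D_Gam_inner by (simp add: inner_commute)
qed

lemma term_split:
  "ereal (Fs x + gFs x \<bullet> (w - x)) + G w + ereal (normGinv2 blk \<gamma> (w - x) / 2)
   = ereal (Fs x - normGinv2 blk \<gamma> (Gam blk \<gamma> (gFs x)) / 2) + (G w + ereal (normGinv2 blk \<gamma> (w - S x) / 2))"
proof -
  have r: "Fs x + gFs x \<bullet> (w - x) + normGinv2 blk \<gamma> (w - x) / 2
        = Fs x - normGinv2 blk \<gamma> (Gam blk \<gamma> (gFs x)) / 2 + normGinv2 blk \<gamma> (w - S x) / 2"
    unfolding normGinv2_shift by (simp add: field_simps)
  show ?thesis
  proof (cases "G w")
    case (real gw)
    then show ?thesis using r by (simp add: algebra_simps)
  next
    case PInf then show ?thesis by simp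
  next
    case MInf then show ?thesis by simp
  qed
qed

lemma FBE_eq: "FBE blk \<gamma> Fs gFs G x = ereal (FB x)"
proof -
  define c where "c = ereal (Fs x - normGinv2 blk \<gamma> (Gam blk \<gamma> (gFs x)) / 2)"
  have mi: "ismin (S x) (Tm x)" unfolding Tm_def by (rule prox_is)
  have at: "ereal (Fs x + gFs x \<bullet> (Tm x - x)) + G (Tm x) + ereal (normGinv2 blk \<gamma> (Tm x - x) / 2) = ereal (FB x)"
    unfolding G_Tm FB_def by simp
  show ?thesis unfolding FBE_def
  proof (rule antisym)
    show "(INF w. ereal (Fs x + gFs x \<bullet> (w - x)) + G w + ereal (normGinv2 blk \<gamma> (w - x) / 2)) \<le> ereal (FB x)"
      by (rule INF_lower2[of "Tm x"]) (use at in simp_all)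
    show "ereal (FB x) \<le> (INF w. ereal (Fs x + gFs x \<bullet> (w - x)) + G w + ereal (normGinv2 blk \<gamma> (w - x) / 2))"
    proof (rule INF_greatest)
      fix w
      have "G (Tm x) + ereal (normGinv2 blk \<gamma> (Tm x - S x) / 2) \<le> G w + ereal (normGinv2 blk \<gamma> (w - S x) / 2)"
        using mi unfolding ismin_def by blast
      then have "c + (G (Tm x) + ereal (normGinv2 blk \<gamma> (Tm x - S x) / 2)) \<le> c + (G w + ereal (normGinv2 blk \<gamma> (w - S x) / 2))"
        by (rule add_left_mono)
      then show "ereal (FB x) \<le> ereal (Fs x + gFs x \<bullet> (w - x)) + G w + ereal (normGinv2 blk \<gamma> (w - x) / 2)"
        unfolding at[symmetric] term_split c_def .
    qed
  qed
qed

lemma FB_upper: "FB z \<le> Fs z + gFs z \<bullet> (Tm x - z) + Gr (Tm x) + normGinv2 blk \<gamma> (Tm x - z) / 2"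
proof -
  have "FBE blk \<gamma> Fs gFs G z \<le> ereal (Fs z + gFs z \<bullet> (Tm x - z)) + G (Tm x) + ereal (normGinv2 blk \<gamma> (Tm x - z) / 2)"
    unfolding FBE_def by (rule INF_lower) simp
  then show ?thesis unfolding FBE_eq G_Tm by simp
qed

end


context setting begin

definition Mx where "Mx = Max ((\<lambda>i. \<gamma> i * L i) ` {..<N})"
definition Cc where "Cc = (real N + Mx) / (real N * s0)"
definition Kc where "Kc = (\<Sum>i<N. L i) / (2 * real N) + 1 / (2 * s0\<^sup>2)"
definition rho where "rho x = norm (D (x - Tm x))"

lemma Mx_ge: "i < N \<Longrightarrow> \<gamma> i * L i \<le> Mx"
  unfolding Mx_def by (intro Max_ge) auto

lemma Mx_nonneg: "Mx \<ge> 0"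
proof -
  have "0 < N" using N_pos by simp
  then have "\<gamma> 0 * L 0 \<le> Mx" by (rule Mx_ge)
  moreover have "\<gamma> 0 > 0" "L 0 \<ge> 0" using \<gamma>_pos L_nonneg \<open>0 < N\<close> by auto
  then have "\<gamma> 0 * L 0 \<ge> 0" by simp
  ultimately show ?thesis by linarith
qed

lemma Cc_nonneg: "Cc \<ge> 0"
  unfolding Cc_def using Mx_nonneg Npos s0_pos by simp

lemma Kc_nonneg: "Kc \<ge> 0"
proof -
  have "(\<Sum>i<N. L i) \<ge> 0" using L_nonneg by (intro sum_nonneg) auto
  then show ?thesis unfolding Kc_def using Npos s0_pos by simp
qed

lemma A_bound: "Fs z - Fs x - gFs z \<bullet> (z - x) \<le> (\<Sum>i<N. L i) / (2 * real N) * (norm (z - x))\<^sup>2"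
proof -
  have "(\<Sum>i<N. f i z - f i x - g i z \<bullet> (z - x)) \<le> (\<Sum>i<N. L i / 2 * (norm (z - x))\<^sup>2)"
  proof (rule sum_mono)
    fix i assume "i \<in> {..<N}"
    then have i: "i < N" by simp
    have "f i x \<ge> f i z + g i z \<bullet> (x - z) - L i / 2 * (norm (x - z))\<^sup>2" by (rule f_descent(2)[OF i])
    moreover have "g i z \<bullet> (x - z) = - (g i z \<bullet> (z - x))" by (simp add: inner_diff_right)
    moreover have "norm (x - z) = norm (z - x)" by (rule norm_minus_commute)
    ultimately show "f i z - f i x - g i z \<bullet> (z - x) \<le> L i / 2 * (norm (z - x))\<^sup>2" by simp
  qed
  also have "\<dots> = (\<Sum>i<N. L i) / 2 * (norm (z - x))\<^sup>2" by (simp add: sum_distrib_right sum_divide_distrib)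
  finally have s: "(\<Sum>i<N. f i z) - (\<Sum>i<N. f i x) - (\<Sum>i<N. g i z \<bullet> (z - x)) \<le> (\<Sum>i<N. L i) / 2 * (norm (z - x))\<^sup>2"
    by (simp add: sum_subtractf)
  have "Fs z - Fs x - gFs z \<bullet> (z - x) = ((\<Sum>i<N. f i z) - (\<Sum>i<N. f i x) - (\<Sum>i<N. g i z \<bullet> (z - x))) / real N"
    unfolding Fs_def gFs_inner by (simp add: diff_divide_distrib)
  also have "\<dots> \<le> ((\<Sum>i<N. L i) / 2 * (norm (z - x))\<^sup>2) / real N"
    using s Npos by (intro divide_right_mono) simp_all
  finally show ?thesis by simp
qed

lemma GamDelta: "norm (Gam blk \<gamma> ((\<Sum>i<N. g i z) - (\<Sum>i<N. g i x))) \<le> Mx * norm (z - x)"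
proof -
  define \<Delta> where "\<Delta> = (\<Sum>i<N. g i z) - (\<Sum>i<N. g i x)"
  have PD: "P i (Gam blk \<gamma> \<Delta>) = \<gamma> i *\<^sub>R (g i z - g i x)" if "i < N" for i
    unfolding P_Gam \<Delta>_def blkproj_diff P_sum_g using that by simp
  have "(norm (Gam blk \<gamma> \<Delta>))\<^sup>2 = (\<Sum>i<N. (norm (P i (Gam blk \<gamma> \<Delta>)))\<^sup>2)"
    by (rule norm_sq_blocks[OF blk_range])
  also have "\<dots> \<le> (\<Sum>i<N. (Mx * norm (P i (z - x)))\<^sup>2)"
  proof (rule sum_mono)
    fix i assume "i \<in> {..<N}"
    then have i: "i < N" by simp
    have gi: "\<gamma> i > 0" using \<gamma>_pos i by simp
    have "norm (P i (Gam blk \<gamma> \<Delta>)) = \<gamma> i * norm (g i z - g i x)"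
      unfolding PD[OF i] using gi by simp
    also have "\<dots> \<le> \<gamma> i * (L i * norm (P i (z - x)))"
      by (rule mult_left_mono[OF g_lipP[OF i]]) (use gi in simp)
    also have "\<dots> = (\<gamma> i * L i) * norm (P i (z - x))" by simp
    also have "\<dots> \<le> Mx * norm (P i (z - x))"
      by (rule mult_right_mono[OF Mx_ge[OF i]]) simp
    finally have "norm (P i (Gam blk \<gamma> \<Delta>)) \<le> Mx * norm (P i (z - x))" .
    then show "(norm (P i (Gam blk \<gamma> \<Delta>)))\<^sup>2 \<le> (Mx * norm (P i (z - x)))\<^sup>2"
      by (rule power_mono) simp
  qed
  also have "\<dots> = Mx\<^sup>2 * (\<Sum>i<N. (norm (P i (z - x)))\<^sup>2)"
    by (simp add: power_mult_distrib sum_distrib_left)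
  also have "\<dots> = (Mx * norm (z - x))\<^sup>2"
    by (simp only: norm_sq_blocks[OF blk_range, symmetric] power_mult_distrib)
  finally have "(norm (Gam blk \<gamma> \<Delta>))\<^sup>2 \<le> (Mx * norm (z - x))\<^sup>2" .
  moreover have "0 \<le> Mx * norm (z - x)" using Mx_nonneg by simp
  ultimately show ?thesis unfolding \<Delta>_def by (rule power2_le_imp_le)
qed


lemma E_main: "FB z - FB x \<le> Cc * rho x * norm (z - x) + Kc * (norm (z - x))\<^sup>2"
proof -
  define p where "p = Tm x"
  define h where "h = z - x"
  define r where "r = x - p"
  define \<Delta> where "\<Delta> = (\<Sum>i<N. g i z) - (\<Sum>i<N. g i x)"
  have U: "FB z \<le> Fs z + gFs z \<bullet> (p - z) + Gr p + normGinv2 blk \<gamma> (p - z) / 2"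
    unfolding p_def by (rule FB_upper)
  have X: "FB x = Fs x + gFs x \<bullet> (p - x) + Gr p + normGinv2 blk \<gamma> (p - x) / 2"
    unfolding p_def FB_def ..
  have pz: "p - z = - (r + 1 *\<^sub>R h)" unfolding r_def h_def by simp
  have n1: "normGinv2 blk \<gamma> (p - z) = (norm (D r))\<^sup>2 + 2 * (D r \<bullet> D h) + (norm (D h))\<^sup>2"
  proof -
    have "normGinv2 blk \<gamma> (p - z) = (norm (D r + 1 *\<^sub>R D h))\<^sup>2"
      unfolding normGinv2_D pz Dm_minus Dm_add Dm_scaleR norm_minus_cancel ..
    also have "\<dots> = (norm (D r))\<^sup>2 + 2 * 1 * (D r \<bullet> D h) + 1\<^sup>2 * (norm (D h))\<^sup>2"
      by (rule norm_add_scale_sq)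
    finally show ?thesis by simp
  qed
  have n2: "normGinv2 blk \<gamma> (p - x) = (norm (D r))\<^sup>2"
    unfolding normGinv2_D r_def Dm_diff by (simp add: norm_minus_commute)
  have lin: "gFs z \<bullet> (p - z) - gFs x \<bullet> (p - x) = - (gFs z \<bullet> h) - (gFs z - gFs x) \<bullet> r"
    unfolding r_def h_def by (simp add: inner_diff_left inner_diff_right)
  have A: "Fs z - Fs x - gFs z \<bullet> h \<le> (\<Sum>i<N. L i) / (2 * real N) * (norm h)\<^sup>2"
    unfolding h_def by (rule A_bound)
  have gd: "gFs z - gFs x = (1 / real N) *\<^sub>R \<Delta>"
    unfolding gFs_def \<Delta>_def by (simp add: scaleR_diff_right)
  have first: "D r \<bullet> D h - (gFs z - gFs x) \<bullet> r = (h - (1 / real N) *\<^sub>R Gam blk \<gamma> \<Delta>) \<bullet> D (D r)"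
  proof -
    have "(h - (1 / real N) *\<^sub>R Gam blk \<gamma> \<Delta>) \<bullet> D (D r) = h \<bullet> D (D r) - (1 / real N) * (Gam blk \<gamma> \<Delta> \<bullet> D (D r))"
      by (simp add: inner_diff_left)
    also have "\<dots> = D h \<bullet> D r - (1 / real N) * (\<Delta> \<bullet> r)"
      by (simp only: Gam_DD_inner DD_inner[of h])
    finally show ?thesis unfolding gd by (simp add: inner_commute)
  qed
  have fb: "(h - (1 / real N) *\<^sub>R Gam blk \<gamma> \<Delta>) \<bullet> D (D r) \<le> Cc * rho x * norm h"
  proof -
    have "(h - (1 / real N) *\<^sub>R Gam blk \<gamma> \<Delta>) \<bullet> D (D r) \<le> norm (h - (1 / real N) *\<^sub>R Gam blk \<gamma> \<Delta>) * norm (D (D r))"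
      by (rule norm_cauchy_schwarz)
    also have "\<dots> \<le> (norm h + Mx * norm h / real N) * (norm (D r) / s0)"
    proof (rule mult_mono)
      have "norm (h - (1 / real N) *\<^sub>R Gam blk \<gamma> \<Delta>) \<le> norm h + norm ((1 / real N) *\<^sub>R Gam blk \<gamma> \<Delta>)"
        by (rule norm_triangle_ineq4)
      also have "norm ((1 / real N) *\<^sub>R Gam blk \<gamma> \<Delta>) = norm (Gam blk \<gamma> \<Delta>) / real N"
        using Npos by simp
      also have "\<dots> \<le> Mx * norm h / real N"
        unfolding \<Delta>_def h_def using Npos GamDelta by (intro divide_right_mono) simp_all
      finally show "norm (h - (1 / real N) *\<^sub>R Gam blk \<gamma> \<Delta>) \<le> norm h + Mx * norm h / real N" by simp
      show "norm (D (D r)) \<le> norm (D r) / s0" by (rule normD_le)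
      show "0 \<le> norm h + Mx * norm h / real N" using Mx_nonneg Npos by simp
      show "0 \<le> norm (D (D r))" by simp
    qed
    also have "\<dots> = Cc * rho x * norm h"
      unfolding Cc_def rho_def r_def p_def using Npos s0_pos by (simp add: field_simps)
    finally show ?thesis .
  qed
  have q: "(norm (D h))\<^sup>2 / 2 \<le> 1 / (2 * s0\<^sup>2) * (norm h)\<^sup>2"
  proof -
    have "norm (D h) \<le> norm h / s0" by (rule normD_le)
    then have "(norm (D h))\<^sup>2 \<le> (norm h / s0)\<^sup>2" by (rule power_mono) simp
    then show ?thesis using s0_pos by (simp add: power_divide field_simps)
  qed
  have "FB z - FB x \<le> (Fs z - Fs x - gFs z \<bullet> h) + (D r \<bullet> D h - (gFs z - gFs x) \<bullet> r) + (norm (D h))\<^sup>2 / 2"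
    using U X n1 n2 lin by (simp add: field_simps)
  also have "\<dots> \<le> (\<Sum>i<N. L i) / (2 * real N) * (norm h)\<^sup>2 + Cc * rho x * norm h + 1 / (2 * s0\<^sup>2) * (norm h)\<^sup>2"
    using A fb q unfolding first by linarith
  also have "\<dots> = Cc * rho x * norm (z - x) + Kc * (norm (z - x))\<^sup>2"
    unfolding Kc_def h_def by (simp add: algebra_simps)
  finally show ?thesis .
qed

end


lemma aux_mult_eq:
  fixes M n1 n2 P dd :: real
  shows "n2 = n1 + 2 * 1 * P + 1\<^sup>2 * dd \<Longrightarrow> M * n2 = M * n1 + 2 * M * P + M * dd"
  by (simp add: algebra_simps)

context setting begin

definition Kp where "Kp = Kc + 3 * Cc / s0"

lemma Kp_nonneg: "Kp \<ge> 0" unfolding Kp_def using Kc_nonneg Cc_nonneg s0_pos by simp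

lemma rho_nonneg: "rho x \<ge> 0" unfolding rho_def by simp

lemma rho_lip: "rho z \<le> rho x + 3 / s0 * norm (z - x)"
proof -
  have e: "D (z - Tm z) = D (x - Tm x) + D (z - x) - D (Tm z - Tm x)"
    by (simp add: Dm_diff)
  have "rho z \<le> norm (D (x - Tm x)) + norm (D (z - x)) + norm (D (Tm z - Tm x))"
    unfolding rho_def e
    by (rule order_trans[OF norm_triangle_ineq4]) (rule add_right_mono[OF norm_triangle_ineq])
  also have "norm (D (Tm z - Tm x)) \<le> 2 * norm (D (z - x))" by (rule T_lip2)
  also have "norm (D (z - x)) \<le> norm (z - x) / s0" by (rule normD_le)
  finally show ?thesis unfolding rho_def by (simp add: field_simps)
qed

lemma two_sided: "\<bar>FB z - FB x\<bar> \<le> Cc * rho x * norm (z - x) + Kp * (norm (z - x))\<^sup>2"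
proof -
  have sq: "0 \<le> (norm (z - x))\<^sup>2" by simp
  have up: "FB z - FB x \<le> Cc * rho x * norm (z - x) + Kp * (norm (z - x))\<^sup>2"
  proof -
    have "Kc \<le> Kp" unfolding Kp_def using Cc_nonneg s0_pos by simp
    then have "Kc * (norm (z - x))\<^sup>2 \<le> Kp * (norm (z - x))\<^sup>2" using sq by (rule mult_right_mono)
    then show ?thesis using E_main[of z x] by linarith
  qed
  have lo: "FB x - FB z \<le> Cc * rho x * norm (z - x) + Kp * (norm (z - x))\<^sup>2"
  proof -
    have "FB x - FB z \<le> Cc * rho z * norm (x - z) + Kc * (norm (x - z))\<^sup>2" by (rule E_main)
    also have "\<dots> = Cc * rho z * norm (z - x) + Kc * (norm (z - x))\<^sup>2" by (simp only: norm_minus_commute[of x z])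
    also have "Cc * rho z * norm (z - x) \<le> Cc * (rho x + 3 / s0 * norm (z - x)) * norm (z - x)"
      by (intro mult_right_mono mult_left_mono rho_lip Cc_nonneg) simp
    also have "Cc * (rho x + 3 / s0 * norm (z - x)) * norm (z - x) + Kc * (norm (z - x))\<^sup>2
        = Cc * rho x * norm (z - x) + Kp * (norm (z - x))\<^sup>2"
      unfolding Kp_def by (simp add: power2_eq_square algebra_simps)
    finally show ?thesis by simp
  qed
  show ?thesis using up lo by linarith
qed

lemma FB_cont: "isCont FB x"
proof -
  have z: "((\<lambda>z. norm (z - x)) \<longlongrightarrow> 0) (at x)"
    by (intro tendsto_norm_zero LIM_zero tendsto_ident_at)
  have z2: "((\<lambda>z. (norm (z - x))\<^sup>2) \<longlongrightarrow> 0) (at x)"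
    using tendsto_power[OF z, of 2] by simp
  have g: "((\<lambda>z. Cc * rho x * norm (z - x) + Kp * (norm (z - x))\<^sup>2) \<longlongrightarrow> 0) (at x)"
    using tendsto_add[OF tendsto_mult_right_zero[OF z, of "Cc * rho x"] tendsto_mult_right_zero[OF z2, of Kp]]
    by simp
  have "((\<lambda>z. FB z - FB x) \<longlongrightarrow> 0) (at x)"
    by (rule Lim_null_comparison[OF _ g]) (simp add: two_sided)
  then show ?thesis unfolding isCont_def by (rule LIM_zero_cancel)
qed


lemma FBE_fun: "FBE blk \<gamma> Fs gFs G = (\<lambda>y. ereal (FB y))"
  using FBE_eq by (intro ext) simp

lemma frechet_near:
  assumes r0: "\<rho>0 > 0"
  shows "\<exists>y v. norm (y - x) < \<rho>0 \<and> v \<in> frechet_subdiff (\<lambda>y. ereal (FB y)) y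
           \<and> norm v \<le> Cc * rho x + 3 * Cc * \<rho>0 / s0
           \<and> \<bar>FB y - FB x\<bar> \<le> Cc * rho x * \<rho>0 + Kp * \<rho>0\<^sup>2"
proof -
  define c where "c = Cc * rho x"
  have c0: "c \<ge> 0" unfolding c_def using Cc_nonneg rho_nonneg by simp
  define M where "M = Kp + 2 * c / \<rho>0 + 1"
  have M1: "M \<ge> 1" unfolding M_def using Kp_nonneg c0 r0 by simp
  define \<psi> where "\<psi> = (\<lambda>y. FB y + M * (norm (y - x))\<^sup>2)"
  have cont: "continuous_on (cball x \<rho>0) \<psi>"
    unfolding \<psi>_def
    by (intro continuous_at_imp_continuous_on ballI continuous_intros FB_cont)
  obtain ys where ys: "ys \<in> cball x \<rho>0" and ysmin: "\<forall>y\<in>cball x \<rho>0. \<psi> ys \<le> \<psi> y"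
    using continuous_attains_inf[OF compact_cball _ cont] r0 by auto
  define d where "d = norm (ys - x)"
  have d0: "d \<ge> 0" unfolding d_def by simp
  have dle: "d \<le> \<rho>0" using ys unfolding d_def mem_cball dist_norm by (simp add: norm_minus_commute)
  have ts: "\<bar>FB ys - FB x\<bar> \<le> c * d + Kp * d\<^sup>2" unfolding c_def d_def by (rule two_sided)
  have dlt: "d < \<rho>0"
  proof (rule ccontr)
    assume "\<not> d < \<rho>0"
    then have dd: "d = \<rho>0" using dle by simp
    have "\<psi> ys \<le> \<psi> x" using ysmin r0 by simp
    then have "FB ys + M * d\<^sup>2 \<le> FB x" unfolding \<psi>_def d_def by simp
    then have "M * d\<^sup>2 \<le> c * d + Kp * d\<^sup>2" using ts by linarith
    moreover have "M * d\<^sup>2 = Kp * d\<^sup>2 + 2 * c * d + d\<^sup>2"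
      unfolding M_def dd using r0 by (simp add: power2_eq_square field_simps)
    ultimately have "c * d + d\<^sup>2 \<le> 0" by linarith
    moreover have "c * d \<ge> 0" using c0 d0 by simp
    moreover have "d\<^sup>2 > 0" using dd r0 by simp
    ultimately show False by linarith
  qed
  define v where "v = (2 * M) *\<^sub>R (x - ys)"
  have sub: "FB y \<ge> FB ys + v \<bullet> (y - ys) - M * (norm (y - ys))\<^sup>2" if y: "norm (y - ys) < \<rho>0 - d" for y
  proof -
    have "norm (y - x) \<le> norm (y - ys) + norm (ys - x)"
      by (metis add_diff_cancel_left add_diff_eq diff_add_cancel norm_triangle_ineq)
    then have "norm (y - x) \<le> \<rho>0" using y unfolding d_def by linarith
    then have "y \<in> cball x \<rho>0" unfolding mem_cball dist_norm by (simp add: norm_minus_commute)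
    then have "\<psi> ys \<le> \<psi> y" using ysmin by blast
    then have le: "FB ys + M * d\<^sup>2 \<le> FB y + M * (norm (y - x))\<^sup>2" unfolding \<psi>_def d_def by simp
    have "y - x = (y - ys) + 1 *\<^sub>R (ys - x)" by simp
    then have nq: "(norm (y - x))\<^sup>2 = (norm (y - ys))\<^sup>2 + 2 * 1 * ((y - ys) \<bullet> (ys - x)) + 1\<^sup>2 * d\<^sup>2"
      unfolding d_def by (metis norm_add_scale_sq)
    have e2: "v \<bullet> (y - ys) = - (2 * M) * ((y - ys) \<bullet> (ys - x))"
      unfolding v_def by (simp add: inner_commute inner_diff_left inner_diff_right algebra_simps)
    have e1: "M * (norm (y - x))\<^sup>2 = M * (norm (y - ys))\<^sup>2 + 2 * M * ((y - ys) \<bullet> (ys - x)) + M * d\<^sup>2"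
      using nq by (rule aux_mult_eq)
    show ?thesis using le e1 e2 by linarith
  qed
  have vfr: "v \<in> frechet_subdiff (\<lambda>y. ereal (FB y)) ys"
    unfolding frechet_subdiff_def
  proof (intro CollectI conjI allI impI)
    show "\<bar>ereal (FB ys)\<bar> \<noteq> \<infinity>" by simp
    fix e :: real assume e: "e > 0"
    define \<delta> where "\<delta> = min (\<rho>0 - d) (e / M)"
    have \<delta>0: "\<delta> > 0" unfolding \<delta>_def using dlt e M1 by simp
    have "\<forall>y. norm (y - ys) < \<delta> \<longrightarrow> ereal (FB ys) + ereal (v \<bullet> (y - ys) - e * norm (y - ys)) \<le> ereal (FB y)"
    proof (intro allI impI)
      fix y assume y: "norm (y - ys) < \<delta>"
      have s: "FB y \<ge> FB ys + v \<bullet> (y - ys) - M * (norm (y - ys))\<^sup>2"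
        by (rule sub) (use y in \<open>simp add: \<delta>_def\<close>)
      have "norm (y - ys) < e / M" using y unfolding \<delta>_def by simp
      then have "M * norm (y - ys) \<le> e" using M1 by (simp add: field_simps)
      then have "M * norm (y - ys) * norm (y - ys) \<le> e * norm (y - ys)"
        by (rule mult_right_mono) simp
      then have "M * (norm (y - ys))\<^sup>2 \<le> e * norm (y - ys)" by (simp add: power2_eq_square mult.assoc)
      then show "ereal (FB ys) + ereal (v \<bullet> (y - ys) - e * norm (y - ys)) \<le> ereal (FB y)"
        using s by simp
    qed
    then show "\<exists>\<delta>>0. \<forall>y. norm (y - ys) < \<delta> \<longrightarrow> ereal (FB ys) + ereal (v \<bullet> (y - ys) - e * norm (y - ys)) \<le> ereal (FB y)"
      using \<delta>0 by blast
  qed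
  have vb: "norm v \<le> Cc * rho ys"
  proof (rule ccontr)
    assume "\<not> norm v \<le> Cc * rho ys"
    define a where "a = norm v - Cc * rho ys"
    have a0: "a > 0" unfolding a_def using \<open>\<not> norm v \<le> Cc * rho ys\<close> by simp
    have vnz: "norm v > 0" using a0 Cc_nonneg rho_nonneg[of ys] unfolding a_def
      by (metis diff_gt_0_iff_gt mult_nonneg_nonneg order.strict_trans1)
    define B where "B = Kc + M + 1"
    have B0: "B > 0" unfolding B_def using Kc_nonneg M1 by simp
    define s where "s = min ((\<rho>0 - d) / 2) (a / (2 * B))"
    have s0': "s > 0" unfolding s_def using dlt a0 B0 by simp
    have "s \<le> (\<rho>0 - d) / 2" unfolding s_def by (rule min.cobounded1)
    moreover have "(\<rho>0 - d) / 2 < \<rho>0 - d" using dlt by simp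
    ultimately have slt: "s < \<rho>0 - d" by (rule le_less_trans)
    have "s \<le> a / (2 * B)" unfolding s_def by (rule min.cobounded2)
    then have "s * B \<le> a / (2 * B) * B" using B0 by (intro mult_right_mono) simp_all
    then have sa: "s * B \<le> a / 2" using B0 by simp
    define u where "u = (1 / norm v) *\<^sub>R v"
    have nu: "norm u = 1" unfolding u_def using vnz by simp
    define y where "y = ys + s *\<^sub>R u"
    have ny: "norm (y - ys) = s" unfolding y_def using nu s0' by simp
    have vu: "v \<bullet> (y - ys) = s * norm v"
      unfolding y_def u_def using vnz by (simp add: power2_norm_eq_inner[symmetric] power2_eq_square)
    have l: "FB y \<ge> FB ys + s * norm v - M * s\<^sup>2" using sub[of y] ny slt vu by simp
    have r: "FB y - FB ys \<le> Cc * rho ys * s + Kc * s\<^sup>2" using E_main[of y ys] ny by simp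
    have "s * norm v \<le> s * (Cc * rho ys) + s * ((Kc + M) * s)"
      using l r by (simp add: power2_eq_square algebra_simps)
    then have "norm v \<le> Cc * rho ys + (Kc + M) * s"
      using s0' by (simp add: distrib_left[symmetric])
    then have "a \<le> (Kc + M) * s" unfolding a_def by simp
    also have "\<dots> \<le> B * s" unfolding B_def using s0' by simp
    also have "\<dots> \<le> a / 2" using sa by (simp add: mult.commute)
    finally show False using a0 by simp
  qed
  have "rho ys \<le> rho x + 3 / s0 * d" unfolding d_def by (rule rho_lip)
  moreover have "3 / s0 * d \<le> 3 / s0 * \<rho>0" using dle s0_pos by (intro mult_left_mono) simp_all
  ultimately have "rho ys \<le> rho x + 3 / s0 * \<rho>0" by linarith
  then have "Cc * rho ys \<le> Cc * (rho x + 3 / s0 * \<rho>0)"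
    using Cc_nonneg by (rule mult_left_mono)
  then have nv: "norm v \<le> Cc * rho x + 3 * Cc * \<rho>0 / s0" using vb by (simp add: algebra_simps)
  have "c * d + Kp * d\<^sup>2 \<le> c * \<rho>0 + Kp * \<rho>0\<^sup>2"
  proof -
    have "c * d \<le> c * \<rho>0" using dle c0 by (rule mult_left_mono)
    moreover have "d\<^sup>2 \<le> \<rho>0\<^sup>2" using dle d0 by (rule power_mono)
    then have "Kp * d\<^sup>2 \<le> Kp * \<rho>0\<^sup>2" using Kp_nonneg by (intro mult_left_mono)
    ultimately show ?thesis by linarith
  qed
  then have fb: "\<bar>FB ys - FB x\<bar> \<le> Cc * rho x * \<rho>0 + Kp * \<rho>0\<^sup>2" using ts unfolding c_def by linarith
  show ?thesis using dlt vfr nv fb unfolding d_def by blast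
qed

end


lemma lim_inv1: "(\<lambda>k. 1 / (real k + 1)) \<longlonglongrightarrow> 0"
  using LIMSEQ_inverse_real_of_nat by (simp add: inverse_eq_divide add.commute)

context setting begin

lemma part_a: "dist0 (limiting_subdiff (FBE blk \<gamma> Fs gFs G) x) \<le> ereal (Cc * rho x)"
proof -
  define e where "e = (\<lambda>k::nat. 1 / (real k + 1))"
  have e0: "e k > 0" for k unfolding e_def by simp
  have e1: "e k \<le> 1" for k unfolding e_def by (simp add: divide_le_eq_1)
  have elim: "e \<longlonglongrightarrow> 0" unfolding e_def by (rule lim_inv1)
  have "\<forall>k. \<exists>y v. norm (y - x) < e k \<and> v \<in> frechet_subdiff (\<lambda>y. ereal (FB y)) y
           \<and> norm v \<le> Cc * rho x + 3 * Cc * e k / s0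
           \<and> \<bar>FB y - FB x\<bar> \<le> Cc * rho x * e k + Kp * (e k)\<^sup>2"
    using frechet_near e0 by blast
  then obtain Y V where YV: "\<And>k. norm (Y k - x) < e k" "\<And>k. V k \<in> frechet_subdiff (\<lambda>y. ereal (FB y)) (Y k)"
    "\<And>k. norm (V k) \<le> Cc * rho x + 3 * Cc * e k / s0"
    "\<And>k. \<bar>FB (Y k) - FB x\<bar> \<le> Cc * rho x * e k + Kp * (e k)\<^sup>2"
    by metis
  have CC: "3 * Cc / s0 \<ge> 0" using Cc_nonneg s0_pos by simp
  have "bounded (range V)"
    unfolding bounded_iff
  proof (intro exI ballI)
    fix w assume "w \<in> range V"
    then obtain k where w: "w = V k" by auto
    have "3 * Cc * e k / s0 \<le> 3 * Cc * 1 / s0"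
      using e1[of k] Cc_nonneg s0_pos by (intro divide_right_mono mult_left_mono) simp_all
    then show "norm w \<le> Cc * rho x + 3 * Cc * 1 / s0" using YV(3)[of k] unfolding w by linarith
  qed
  then obtain v r where r: "strict_mono r" and Vr: "(V \<circ> r) \<longlonglongrightarrow> v"
    using bounded_imp_convergent_subsequence by blast
  have er: "e (r k) \<le> e k" for k
  proof -
    have "k \<le> r k" using r by (rule seq_suble)
    then show ?thesis unfolding e_def by (intro divide_left_mono) simp_all
  qed
  have Yr: "(Y \<circ> r) \<longlonglongrightarrow> x"
  proof -
    have "(\<lambda>k. (Y \<circ> r) k - x) \<longlonglongrightarrow> 0"
    proof (rule Lim_null_comparison[OF _ elim])
      show "\<forall>\<^sub>F k in sequentially. norm ((Y \<circ> r) k - x) \<le> e k"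
        using YV(1) er by (intro always_eventually allI) (metis comp_apply less_imp_le order_trans)
    qed
    then show ?thesis by (rule LIM_zero_cancel)
  qed
  have FBr: "(\<lambda>k. ereal (FB ((Y \<circ> r) k))) \<longlonglongrightarrow> ereal (FB x)"
  proof -
    have e2: "(\<lambda>k. (e k)\<^sup>2) \<longlonglongrightarrow> 0" using tendsto_power[OF elim, of 2] by simp
    have g: "(\<lambda>k. Cc * rho x * e k + Kp * (e k)\<^sup>2) \<longlonglongrightarrow> 0"
      using tendsto_add[OF tendsto_mult_right_zero[OF elim, of "Cc * rho x"]
          tendsto_mult_right_zero[OF e2, of Kp]] by simp
    have "(\<lambda>k. FB ((Y \<circ> r) k) - FB x) \<longlonglongrightarrow> 0"
    proof (rule Lim_null_comparison[OF _ g])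
      show "\<forall>\<^sub>F k in sequentially. norm (FB ((Y \<circ> r) k) - FB x) \<le> Cc * rho x * e k + Kp * (e k)\<^sup>2"
      proof (intro always_eventually allI)
        fix k
        have a: "Cc * rho x * e (r k) \<le> Cc * rho x * e k"
          using er[of k] Cc_nonneg rho_nonneg by (intro mult_left_mono) simp_all
        have "(e (r k))\<^sup>2 \<le> (e k)\<^sup>2" using er[of k] e0[of "r k"] by (intro power_mono) simp_all
        then have b: "Kp * (e (r k))\<^sup>2 \<le> Kp * (e k)\<^sup>2" using Kp_nonneg by (intro mult_left_mono)
        show "norm (FB ((Y \<circ> r) k) - FB x) \<le> Cc * rho x * e k + Kp * (e k)\<^sup>2"
          using YV(4)[of "r k"] a b by simp
      qed
    qed
    then have "(\<lambda>k. FB ((Y \<circ> r) k)) \<longlonglongrightarrow> FB x" by (rule LIM_zero_cancel)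
    then show ?thesis by (rule tendsto_ereal)
  qed
  have vin: "v \<in> limiting_subdiff (FBE blk \<gamma> Fs gFs G) x"
    unfolding FBE_fun limiting_subdiff_def
  proof (intro CollectI conjI exI)
    show "\<bar>ereal (FB x)\<bar> \<noteq> \<infinity>" by simp
    show "(Y \<circ> r) \<longlonglongrightarrow> x" by (rule Yr)
    show "(\<lambda>k. ereal (FB ((Y \<circ> r) k))) \<longlonglongrightarrow> ereal (FB x)" by (rule FBr)
    show "(V \<circ> r) \<longlonglongrightarrow> v" by (rule Vr)
    show "\<forall>k. (V \<circ> r) k \<in> frechet_subdiff (\<lambda>y. ereal (FB y)) ((Y \<circ> r) k)" using YV(2) by simp
  qed
  have nv: "norm v \<le> Cc * rho x"
  proof (rule tendsto_le[OF trivial_limit_sequentially])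
    show "(\<lambda>k. norm ((V \<circ> r) k)) \<longlonglongrightarrow> norm v" by (rule tendsto_norm[OF Vr])
    have "(\<lambda>k. Cc * rho x + 3 * Cc / s0 * e k) \<longlonglongrightarrow> Cc * rho x + 3 * Cc / s0 * 0"
      by (intro tendsto_intros elim)
    then show "(\<lambda>k. Cc * rho x + 3 * Cc / s0 * e k) \<longlonglongrightarrow> Cc * rho x" by simp
    show "\<forall>\<^sub>F k in sequentially. norm ((V \<circ> r) k) \<le> Cc * rho x + 3 * Cc / s0 * e k"
    proof (intro always_eventually allI)
      fix k
      have "3 * Cc / s0 * e (r k) \<le> 3 * Cc / s0 * e k" using er[of k] CC by (rule mult_left_mono)
      then show "norm ((V \<circ> r) k) \<le> Cc * rho x + 3 * Cc / s0 * e k" using YV(3)[of "r k"] by simp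
    qed
  qed
  have "dist0 (limiting_subdiff (FBE blk \<gamma> Fs gFs G) x) \<le> ereal (norm v)"
    unfolding dist0_def by (rule INF_lower[OF vin])
  also have "\<dots> \<le> ereal (Cc * rho x)" using nv by simp
  finally show ?thesis .
qed

end

theorem lemmaA2:
  fixes N :: nat
    and blk :: "'n::finite \<Rightarrow> nat"
    and f :: "nat \<Rightarrow> real^'n \<Rightarrow> real"
    and g :: "nat \<Rightarrow> real^'n \<Rightarrow> real^'n"
    and L :: "nat \<Rightarrow> real"
    and \<gamma> :: "nat \<Rightarrow> real"
    and \<mu> :: "nat \<Rightarrow> real"
    and G :: "real^'n \<Rightarrow> ereal"
  assumes N_pos: "N \<ge> 1"
    and blk_range: "\<forall>j. blk j < N"
    and blk_nonempty: "\<forall>i<N. \<exists>j. blk j = i"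
    and f_block: "\<forall>i<N. \<forall>x y. blkproj blk i x = blkproj blk i y \<longrightarrow> f i x = f i y"
    and f_grad: "\<forall>i<N. \<forall>x. GDERIV (f i) x :> g i x"
    and L_nonneg: "\<forall>i<N. L i \<ge> 0"
    and g_lip: "\<forall>i<N. \<forall>x y. norm (g i x - g i y) \<le> L i * norm (x - y)"
    and \<gamma>_pos: "\<forall>i<N. \<gamma> i > 0"
    and \<gamma>_bound: "\<forall>i<N. \<gamma> i * L i < real N"
    and G_proper: "proper_fun G"
    and G_lsc: "lsc_fun G"
    and G_convex: "convex_fun G"
    and argmin: "\<exists>x. \<forall>y. ereal ((\<Sum>i<N. f i x) / real N) + G x
                         \<le> ereal ((\<Sum>i<N. f i y) / real N) + G y"
  defines "F \<equiv> (\<lambda>x. (\<Sum>i<N. f i x) / real N)"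
    and "gF \<equiv> (\<lambda>x. (1 / real N) *\<^sub>R (\<Sum>i<N. g i x))"
    and "T \<equiv> (\<lambda>x. proxG blk \<gamma> G (x - Gam blk \<gamma> ((1 / real N) *\<^sub>R (\<Sum>i<N. g i x))))"
  shows "(\<forall>x. dist0 (limiting_subdiff (FBE blk \<gamma> F gF G) x)
               \<le> ereal ((real N + Max ((\<lambda>i. \<gamma> i * L i) ` {..<N}))
                        / (real N * Min ((\<lambda>i. sqrt (\<gamma> i)) ` {..<N}))
                        * normGinv blk \<gamma> (x - T x)))
       \<and> (\<exists>LT\<ge>0. \<forall>x y. normGinv blk \<gamma> (T x - T y) \<le> LT * normGinv blk \<gamma> (x - y))
       \<and> ((\<forall>i<N. \<mu> i > 0 \<and>
              convex_on UNIV (\<lambda>x. f i x - \<mu> i / 2 * (norm (blkproj blk i x))\<^sup>2))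
          \<longrightarrow> (\<exists>LT\<ge>0. LT \<le> 1 - Min ((\<lambda>i. \<gamma> i * \<mu> i) ` {..<N}) / real N \<and>
                 (\<forall>x y. normGinv blk \<gamma> (T x - T y) \<le> LT * normGinv blk \<gamma> (x - y))))"
  proof -
  interpret setting N blk f g L \<gamma> G
    by unfold_locales (fact N_pos blk_range blk_nonempty f_block f_grad L_nonneg g_lip \<gamma>_pos \<gamma>_bound
        G_proper G_lsc G_convex argmin)+
  have FF: "F = Fs" unfolding F_def by (simp add: fun_eq_iff Fs_def)
  have gg: "gF = gFs" unfolding gF_def by (simp add: fun_eq_iff gFs_def)
  have TT: "T = Tm" unfolding T_def by (simp add: fun_eq_iff Tm_def S_def gFs_def)
  have a: "\<forall>x. dist0 (limiting_subdiff (FBE blk \<gamma> F gF G) x)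
               \<le> ereal ((real N + Max ((\<lambda>i. \<gamma> i * L i) ` {..<N}))
                        / (real N * Min ((\<lambda>i. sqrt (\<gamma> i)) ` {..<N}))
                        * normGinv blk \<gamma> (x - T x))"
  proof
    fix x
    show "dist0 (limiting_subdiff (FBE blk \<gamma> F gF G) x)
               \<le> ereal ((real N + Max ((\<lambda>i. \<gamma> i * L i) ` {..<N}))
                        / (real N * Min ((\<lambda>i. sqrt (\<gamma> i)) ` {..<N}))
                        * normGinv blk \<gamma> (x - T x))"
      using part_a[of x] unfolding FF gg TT Cc_def Mx_def s0_def rho_def normGinv_D .
  qed
  have b: "\<exists>LT\<ge>0. \<forall>x y. normGinv blk \<gamma> (T x - T y) \<le> LT * normGinv blk \<gamma> (x - y)"
    unfolding TT normGinv_D using T_lip2 by (intro exI[of _ 2]) simp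
  have c: "(\<forall>i<N. \<mu> i > 0 \<and>
              convex_on UNIV (\<lambda>x. f i x - \<mu> i / 2 * (norm (blkproj blk i x))\<^sup>2))
          \<longrightarrow> (\<exists>LT\<ge>0. LT \<le> 1 - Min ((\<lambda>i. \<gamma> i * \<mu> i) ` {..<N}) / real N \<and>
                 (\<forall>x y. normGinv blk \<gamma> (T x - T y) \<le> LT * normGinv blk \<gamma> (x - y)))"
  proof
    assume sc: "\<forall>i<N. \<mu> i > 0 \<and> convex_on UNIV (\<lambda>x. f i x - \<mu> i / 2 * (norm (blkproj blk i x))\<^sup>2)"
    show "\<exists>LT\<ge>0. LT \<le> 1 - Min ((\<lambda>i. \<gamma> i * \<mu> i) ` {..<N}) / real N \<and>
                 (\<forall>x y. normGinv blk \<gamma> (T x - T y) \<le> LT * normGinv blk \<gamma> (x - y))"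
      unfolding TT normGinv_D
      using T_lip_sc[OF sc] by (intro exI[of _ "1 - Min ((\<lambda>i. \<gamma> i * \<mu> i) ` {..<N}) / real N"]) blast
  qed
  show ?thesis using a b c by blast
qed

end
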